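(* Let $n\geq 1$ and $d\geq 1$ be integers. Then $d\in A_n$ if and only if $k(n,d)\geq |r(n,d)|+1$.
   Context: A walk is a finite sequence $z_0,z_1,\dots,z_l$ of Gaussian integers with $|z_{j+1}-z_j|=1$ for all $0\le j<l$. For natural numbers $n,d$, $n$ is called $d$-avoidable if there exists a walk $(z_j)$ and indices $r,s$ with $z_r-z_s=n$ such that $z_t-z_u\neq d$ for all indices $t,u$. $A_n$ denotes the set of all $d\in\mathbb{N}$ such that $n$ is not $d$-avoidable. For integers $n$ and $d\ge1$, $k(n,d)$ and $r(n,d)$ are the unique integers with $n=k(n,d)\,d+r(n,d)$ and $r(n,d)\in\left[-\lfloor d/2\rfloor,\ \lceil d/2\rceil-1\right]$. *)

theory Defs
  imports Complex_Main
begin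

definition gaussian_int :: "complex \<Rightarrow> bool" where
  "gaussian_int z \<longleftrightarrow> Re z \<in> \<int> \<and> Im z \<in> \<int>"

definition is_walk :: "complex list \<Rightarrow> bool" where
  "is_walk zs \<longleftrightarrow> zs \<noteq> [] \<and> (\<forall>z\<in>set zs. gaussian_int z) \<and>
     (\<forall>j. Suc j < length zs \<longrightarrow> cmod (zs ! Suc j - zs ! j) = 1)"

definition avoidable :: "nat \<Rightarrow> nat \<Rightarrow> bool" where
  "avoidable n d \<longleftrightarrow>
     (\<exists>zs r s. is_walk zs \<and> r < length zs \<and> s < length zs \<and>
        zs ! r - zs ! s = of_nat n \<and>
        (\<forall>t < length zs. \<forall>u < length zs. zs ! t - zs ! u \<noteq> of_nat d))"

definition A_set :: "nat \<Rightarrow> nat set" where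
  "A_set n = {d. \<not> avoidable n d}"

definition kr_pair :: "int \<Rightarrow> int \<Rightarrow> int \<times> int" where
  "kr_pair n d = (THE p. n = fst p * d + snd p \<and>
      - \<lfloor>real_of_int d / 2\<rfloor> \<le> snd p \<and> snd p \<le> \<lceil>real_of_int d / 2\<rceil> - 1)"

definition k_nd :: "int \<Rightarrow> int \<Rightarrow> int" where "k_nd n d = fst (kr_pair n d)"
definition r_nd :: "int \<Rightarrow> int \<Rightarrow> int" where "r_nd n d = snd (kr_pair n d)"

end

theory Submission
  imports Defs
begin

lemma divhelp: "0 \<le> r \<Longrightarrow> r < (N::int) \<Longrightarrow> (N*q + r) div N = q"
  by (metis add.commute add_cancel_right_left div_mult_self2 div_pos_pos_trivial
       mult.commute not_less_iff_gr_or_eq order_le_less_trans)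

lemma div_step: assumes "(N::int) > 0"
  shows "a div N - (a - 1) div N = (if a mod N = 0 then 1 else 0)"
proof -
  have a: "a = N * (a div N) + a mod N" by simp
  have m: "0 \<le> a mod N" "a mod N < N" using assms by auto
  show ?thesis
  proof (cases "a mod N = 0")
    case True
    have e: "a - 1 = N * (a div N - 1) + (N - 1)" using a True by (simp add: algebra_simps)
    have "(a - 1) div N = a div N - 1" unfolding e using divhelp[of "N-1" N "a div N - 1"] assms by simp
    thus ?thesis using True by simp
  next
    case False
    have e: "a - 1 = N * (a div N) + (a mod N - 1)" using a by (simp add: algebra_simps)
    have "(a - 1) div N = a div N" unfolding e using divhelp[of "a mod N - 1" N "a div N"] m False by simp
    thus ?thesis using False by simp
  qed
qed

definition adj :: "int \<times> int \<Rightarrow> int \<times> int \<Rightarrow> bool" where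
  "adj p q \<longleftrightarrow> (snd p = snd q \<and> \<bar>fst q - fst p\<bar> = 1) \<or> (fst p = fst q \<and> \<bar>snd q - snd p\<bar> = 1)"

definition iwalk :: "(int \<times> int) list \<Rightarrow> bool" where
  "iwalk vs \<longleftrightarrow> (\<forall>t. Suc t < length vs \<longrightarrow> adj (vs!t) (vs!Suc t))"

lemma adj_cases:
  assumes "adj p q"
  obtains (R) "snd p = snd q" "fst q = fst p + 1"
    | (L) "snd p = snd q" "fst p = fst q + 1"
    | (U) "fst p = fst q" "snd q = snd p + 1"
    | (D) "fst p = fst q" "snd p = snd q + 1"
  using assms unfolding adj_def by (auto simp: abs_if split: if_splits)

definition sg :: "(int \<times> int) list \<Rightarrow> int \<Rightarrow> int \<Rightarrow> nat \<Rightarrow> int" where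
 "sg vs N x t =
    (if snd (vs!t) = snd (vs!Suc t) \<and> fst (vs!Suc t) = fst (vs!t) + 1 \<and> (fst (vs!t) - x) mod N = 0 then 1
     else if snd (vs!t) = snd (vs!Suc t) \<and> fst (vs!t) = fst (vs!Suc t) + 1 \<and> (fst (vs!Suc t) - x) mod N = 0 then -1
     else 0)"

definition BB :: "(int \<times> int) list \<Rightarrow> int \<Rightarrow> int \<Rightarrow> int \<Rightarrow> int" where
 "BB vs N x h = (\<Sum>t<length vs - 1. sg vs N x t * (if snd (vs!t) > h then 1 else 0))"

lemma sg_period: "(x - x') mod N = 0 \<Longrightarrow> sg vs N x t = sg vs N x' t"
proof -
  assume h: "(x - x') mod N = 0"
  have "\<And>a. ((a - x) mod N = 0) = ((a - x') mod N = 0)"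
  proof -
    fix a
    have "a - x' = (a - x) + (x - x')" by simp
    thus "((a - x) mod N = 0) = ((a - x') mod N = 0)"
      using h by (metis dvd_add_left_iff dvd_add_right_iff mod_0_imp_dvd dvd_imp_mod_0)
  qed
  thus ?thesis unfolding sg_def by simp
qed

lemma BB_period: "(x - x') mod N = 0 \<Longrightarrow> BB vs N x h = BB vs N x' h"
  unfolding BB_def using sg_period by simp

lemma sg_nz:
  assumes "sg vs N x t \<noteq> 0" "Suc t < length vs"
  shows "\<exists>u\<in>set vs. (fst u - x) mod N = 0 \<and> snd u = snd (vs!t)"
proof (cases "snd (vs!t) = snd (vs!Suc t) \<and> fst (vs!Suc t) = fst (vs!t) + 1 \<and> (fst (vs!t) - x) mod N = 0")
  case True
  thus ?thesis using assms(2) by (intro bexI[of _ "vs!t"]) auto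
next
  case False
  hence "snd (vs!t) = snd (vs!Suc t) \<and> (fst (vs!Suc t) - x) mod N = 0"
    using assms(1) unfolding sg_def by (auto split: if_splits)
  thus ?thesis using assms(2) by (intro bexI[of _ "vs!Suc t"]) auto
qed

lemma wind:
  assumes "N > 0" "iwalk vs" "vs \<noteq> []" "fst (last vs) = fst (hd vs) + e * N"
  shows "(\<Sum>t<length vs - 1. sg vs N x t) = e"
proof -
  define F where "F X = (X - x - 1) div N" for X
  have step: "sg vs N x t = F (fst (vs!Suc t)) - F (fst (vs!t))" if t: "t < length vs - 1" for t
  proof -
    have "adj (vs!t) (vs!Suc t)" using assms(2) t unfolding iwalk_def by auto
    thus ?thesis
    proof (cases rule: adj_cases)
      case R
      have "F (fst (vs!Suc t)) - F (fst (vs!t)) = (fst (vs!t) - x) div N - (fst (vs!t) - x - 1) div N"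
        unfolding F_def using R by simp
      also have "\<dots> = (if (fst (vs!t) - x) mod N = 0 then 1 else 0)" by (rule div_step[OF assms(1)])
      finally show ?thesis unfolding sg_def using R by simp
    next
      case L
      have "F (fst (vs!t)) - F (fst (vs!Suc t)) = (fst (vs!Suc t) - x) div N - (fst (vs!Suc t) - x - 1) div N"
        unfolding F_def using L by simp
      also have "\<dots> = (if (fst (vs!Suc t) - x) mod N = 0 then 1 else 0)" by (rule div_step[OF assms(1)])
      finally show ?thesis unfolding sg_def using L by auto
    next
      case U thus ?thesis unfolding sg_def by auto
    next
      case D thus ?thesis unfolding sg_def by auto
    qed
  qed
  have "(\<Sum>t<length vs - 1. sg vs N x t) = (\<Sum>t<length vs - 1. F (fst (vs!Suc t)) - F (fst (vs!t)))"
    using step by simp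
  also have "\<dots> = F (fst (vs!(length vs - 1))) - F (fst (vs!0))"
    by (rule sum_lessThan_telescope)
  also have "vs!(length vs - 1) = last vs" using assms(3) by (simp add: last_conv_nth)
  also have "vs!0 = hd vs" using assms(3) by (simp add: hd_conv_nth)
  also have "F (fst (last vs)) - F (fst (hd vs)) = e"
  proof -
    have "fst (hd vs) + e * N - x - 1 = (fst (hd vs) - x - 1) + e * N" by simp
    hence "(fst (hd vs) + e * N - x - 1) div N = e + (fst (hd vs) - x - 1) div N"
      using assms(1) by (metis div_mult_self1 less_irrefl)
    thus ?thesis unfolding F_def assms(4) by simp
  qed
  finally show ?thesis .
qed

lemma nth_in_set_Suc: "Suc t < length vs \<Longrightarrow> vs!t \<in> set vs \<and> vs!Suc t \<in> set vs"
  by auto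

lemma BB_vert_term:
  assumes h: "\<forall>v\<in>set vs. snd v = Y + 1 \<longrightarrow> (fst v - X) mod N \<noteq> 0" and t: "Suc t < length vs"
  shows "sg vs N X t * (if snd (vs!t) > Y then 1 else 0) = sg vs N X t * (if snd (vs!t) > Y + 1 then 1 else 0)"
proof (cases "snd (vs!t) = Y + 1")
  case True
  have "sg vs N X t = 0"
  proof (rule ccontr)
    assume "sg vs N X t \<noteq> 0"
    have "\<exists>u\<in>set vs. (fst u - X) mod N = 0 \<and> snd u = snd (vs!t)" by (rule sg_nz[OF \<open>sg vs N X t \<noteq> 0\<close> t])
    then obtain u where u0: "u \<in> set vs" and u1: "(fst u - X) mod N = 0 \<and> snd u = snd (vs!t)" by (rule bexE)
    have u: "u \<in> set vs" "(fst u - X) mod N = 0" "snd u = snd (vs!t)" using u0 u1 by simp_all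
    have "snd u = Y + 1" using u(3) True by simp
    hence "(fst u - X) mod N \<noteq> 0" using bspec[OF h u(1)] by simp
    with u(2) show False by simp
  qed
  thus ?thesis by simp
next
  case False
  hence "(snd (vs!t) > Y) = (snd (vs!t) > Y + 1)" by auto
  thus ?thesis by simp
qed

lemma BB_vert:
  assumes h: "\<forall>v\<in>set vs. snd v = Y + 1 \<longrightarrow> (fst v - X) mod N \<noteq> 0"
  shows "BB vs N X Y = BB vs N X (Y + 1)"
  unfolding BB_def
  by (rule sum.cong[OF refl], rule BB_vert_term[OF h]) auto

lemma sg_R: "snd (vs!t) = snd (vs!Suc t) \<Longrightarrow> fst (vs!Suc t) = fst (vs!t) + 1 \<Longrightarrow>
   sg vs N x t = (if (fst (vs!t) - x) mod N = 0 then 1 else 0)"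
  unfolding sg_def by simp

lemma sg_L: "snd (vs!t) = snd (vs!Suc t) \<Longrightarrow> fst (vs!t) = fst (vs!Suc t) + 1 \<Longrightarrow>
   sg vs N x t = (if (fst (vs!Suc t) - x) mod N = 0 then -1 else 0)"
  unfolding sg_def by simp

lemma sg_V: "snd (vs!t) \<noteq> snd (vs!Suc t) \<Longrightarrow> sg vs N x t = 0"
  unfolding sg_def by simp

lemma BB_horiz:
  assumes w: "iwalk vs" "vs \<noteq> []" and per: "snd (last vs) = snd (hd vs)" "(fst (last vs) - fst (hd vs)) mod N = 0"
    and h: "\<forall>v\<in>set vs. snd v = Y \<longrightarrow> (fst v - (X + 1)) mod N \<noteq> 0"
  shows "BB vs N X Y = BB vs N (X + 1) Y"
proof -
  define \<phi> where "\<phi> v = (if snd v > Y \<and> (fst v - (X + 1)) mod N = 0 then 1 else 0 :: int)" for v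
  have step: "(sg vs N X t - sg vs N (X+1) t) * (if snd (vs!t) > Y then 1 else 0) = \<phi> (vs!Suc t) - \<phi> (vs!t)"
    if t: "t < length vs - 1" for t
  proof -
    have tt: "Suc t < length vs" using t by auto
    have m1: "vs!t \<in> set vs" "vs!Suc t \<in> set vs" using tt by auto
    have "adj (vs!t) (vs!Suc t)" using w(1) tt unfolding iwalk_def by auto
    thus ?thesis
    proof (cases rule: adj_cases)
      case R
      have e1: "fst (vs!Suc t) - (X + 1) = fst (vs!t) - X" using R by simp
      have e2: "fst (vs!t) - (X + 1) = fst (vs!t) - X - 1" by simp
      show ?thesis unfolding sg_R[OF R] \<phi>_def e1 using R(1) by (simp add: e2)
    next
      case L
      have e1: "fst (vs!t) - (X + 1) = fst (vs!Suc t) - X" using L by simp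
      show ?thesis unfolding sg_L[OF L] \<phi>_def e1 using L(1) by simp
    next
      case U
      have "\<phi> (vs!Suc t) = \<phi> (vs!t)"
      proof (cases "snd (vs!t) = Y")
        case True
        hence "(fst (vs!t) - (X + 1)) mod N \<noteq> 0" using bspec[OF h m1(1)] by simp
        thus ?thesis unfolding \<phi>_def using U by auto
      next
        case False thus ?thesis unfolding \<phi>_def using U by auto
      qed
      moreover have "snd (vs!t) \<noteq> snd (vs!Suc t)" using U by simp
      ultimately show ?thesis using sg_V[of vs t] by simp
    next
      case D
      have "\<phi> (vs!Suc t) = \<phi> (vs!t)"
      proof (cases "snd (vs!Suc t) = Y")
        case True
        hence "(fst (vs!Suc t) - (X + 1)) mod N \<noteq> 0" using bspec[OF h m1(2)] by simp
        thus ?thesis unfolding \<phi>_def using D by auto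
      next
        case False thus ?thesis unfolding \<phi>_def using D by auto
      qed
      moreover have "snd (vs!t) \<noteq> snd (vs!Suc t)" using D by simp
      ultimately show ?thesis using sg_V[of vs t] by simp
    qed
  qed
  have "(\<Sum>t<length vs - 1. (sg vs N X t - sg vs N (X+1) t) * (if snd (vs!t) > Y then 1 else 0))
      = (\<Sum>t<length vs - 1. \<phi> (vs!Suc t) - \<phi> (vs!t))" using step by simp
  also have "\<dots> = \<phi> (vs!(length vs - 1)) - \<phi> (vs!0)" by (rule sum_lessThan_telescope)
  also have "vs!(length vs - 1) = last vs" using w(2) by (simp add: last_conv_nth)
  also have "vs!0 = hd vs" using w(2) by (simp add: hd_conv_nth)
  also have "\<phi> (last vs) = \<phi> (hd vs)"
  proof -
    have "fst (last vs) - (X + 1) = (fst (hd vs) - (X + 1)) + (fst (last vs) - fst (hd vs))" by simp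
    hence "((fst (last vs) - (X + 1)) mod N = 0) = ((fst (hd vs) - (X + 1)) mod N = 0)"
      using per(2) by (metis dvd_add_left_iff mod_0_imp_dvd dvd_imp_mod_0)
    thus ?thesis unfolding \<phi>_def using per(1) by simp
  qed
  finally have "(\<Sum>t<length vs - 1. (sg vs N X t - sg vs N (X+1) t) * (if snd (vs!t) > Y then 1 else 0)) = 0"
    by simp
  thus ?thesis unfolding BB_def by (simp add: sum_subtractf left_diff_distrib)
qed

definition disj :: "(int \<times> int) list \<Rightarrow> int \<Rightarrow> int \<Rightarrow> bool" where
  "disj vs N s \<longleftrightarrow> (\<forall>u\<in>set vs. \<forall>v\<in>set vs. snd u = snd v \<longrightarrow> (fst v - fst u - s) mod N \<noteq> 0)"

lemma disj_neg: "disj vs N s \<Longrightarrow> disj vs N (-s)"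
  unfolding disj_def
proof (intro ballI impI)
  fix u v assume h: "\<forall>u\<in>set vs. \<forall>v\<in>set vs. snd u = snd v \<longrightarrow> (fst v - fst u - s) mod N \<noteq> 0"
    and uv: "u \<in> set vs" "v \<in> set vs" "snd u = snd v"
  have "(fst u - fst v - s) mod N \<noteq> 0" using bspec[OF bspec[OF h uv(2)] uv(1)] uv(3) by simp
  hence "\<not> N dvd (fst u - fst v - s)" by (simp add: dvd_eq_mod_eq_0)
  hence "\<not> N dvd (fst v - fst u - - s)"
    by (metis dvd_minus_iff minus_diff_eq diff_minus_eq_add add.commute diff_diff_eq2)
  thus "(fst v - fst u - - s) mod N \<noteq> 0" by (simp add: dvd_eq_mod_eq_0)
qed

lemma const_step:
  assumes w: "iwalk vs" "vs \<noteq> []" and per: "snd (last vs) = snd (hd vs)" "(fst (last vs) - fst (hd vs)) mod N = 0"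
    and dj: "disj vs N s" and t: "Suc t < length vs"
  shows "BB vs N (fst (vs!t) + s) (snd (vs!t)) = BB vs N (fst (vs!Suc t) + s) (snd (vs!Suc t))"
proof -
  have m1: "vs!t \<in> set vs" "vs!Suc t \<in> set vs" using t by auto
  have D: "\<And>u v. u \<in> set vs \<Longrightarrow> v \<in> set vs \<Longrightarrow> snd u = snd v \<Longrightarrow> (fst v - fst u - s) mod N \<noteq> 0"
  proof -
    fix u v assume a: "u \<in> set vs" "v \<in> set vs" "snd u = snd v"
    show "(fst v - fst u - s) mod N \<noteq> 0" using bspec[OF bspec[OF dj[unfolded disj_def] a(1)] a(2)] a(3) by simp
  qed
  have "adj (vs!t) (vs!Suc t)" using w(1) t unfolding iwalk_def by auto
  thus ?thesis
  proof (cases rule: adj_cases)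
    case R
    have h: "\<forall>v\<in>set vs. snd v = snd (vs!t) \<longrightarrow> (fst v - (fst (vs!t) + s + 1)) mod N \<noteq> 0"
    proof (intro ballI impI)
      fix v assume "v \<in> set vs" "snd v = snd (vs!t)"
      hence "(fst v - fst (vs!Suc t) - s) mod N \<noteq> 0" using D[OF m1(2)] R(1) by simp
      thus "(fst v - (fst (vs!t) + s + 1)) mod N \<noteq> 0" using R(2) by (simp add: algebra_simps)
    qed
    have "BB vs N (fst (vs!t) + s) (snd (vs!t)) = BB vs N (fst (vs!t) + s + 1) (snd (vs!t))"
      by (rule BB_horiz[OF w per h])
    thus ?thesis using R by (simp add: algebra_simps)
  next
    case L
    have h: "\<forall>v\<in>set vs. snd v = snd (vs!t) \<longrightarrow> (fst v - (fst (vs!Suc t) + s + 1)) mod N \<noteq> 0"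
    proof (intro ballI impI)
      fix v assume "v \<in> set vs" "snd v = snd (vs!t)"
      hence "(fst v - fst (vs!t) - s) mod N \<noteq> 0" using D[OF m1(1)] by simp
      thus "(fst v - (fst (vs!Suc t) + s + 1)) mod N \<noteq> 0" using L(2) by (simp add: algebra_simps)
    qed
    have "BB vs N (fst (vs!Suc t) + s) (snd (vs!t)) = BB vs N (fst (vs!Suc t) + s + 1) (snd (vs!t))"
      by (rule BB_horiz[OF w per h])
    thus ?thesis using L by (simp add: algebra_simps)
  next
    case U
    have h: "\<forall>v\<in>set vs. snd v = snd (vs!t) + 1 \<longrightarrow> (fst v - (fst (vs!t) + s)) mod N \<noteq> 0"
    proof (intro ballI impI)
      fix v assume "v \<in> set vs" "snd v = snd (vs!t) + 1"
      hence "(fst v - fst (vs!Suc t) - s) mod N \<noteq> 0" using D[OF m1(2)] U(2) by simp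
      thus "(fst v - (fst (vs!t) + s)) mod N \<noteq> 0" using U(1) by (simp add: algebra_simps)
    qed
    have "BB vs N (fst (vs!t) + s) (snd (vs!t)) = BB vs N (fst (vs!t) + s) (snd (vs!t) + 1)"
      by (rule BB_vert[OF h])
    thus ?thesis using U by simp
  next
    case D2: D
    have h: "\<forall>v\<in>set vs. snd v = snd (vs!Suc t) + 1 \<longrightarrow> (fst v - (fst (vs!t) + s)) mod N \<noteq> 0"
    proof (intro ballI impI)
      fix v assume "v \<in> set vs" "snd v = snd (vs!Suc t) + 1"
      hence "(fst v - fst (vs!t) - s) mod N \<noteq> 0" using D[OF m1(1)] D2(2) by simp
      thus "(fst v - (fst (vs!t) + s)) mod N \<noteq> 0" by (simp add: algebra_simps)
    qed
    have "BB vs N (fst (vs!t) + s) (snd (vs!Suc t)) = BB vs N (fst (vs!t) + s) (snd (vs!Suc t) + 1)"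
      by (rule BB_vert[OF h])
    thus ?thesis using D2 by simp
  qed
qed

lemma const_all:
  assumes w: "iwalk vs" "vs \<noteq> []" and per: "snd (last vs) = snd (hd vs)" "(fst (last vs) - fst (hd vs)) mod N = 0"
    and dj: "disj vs N s"
  shows "t < length vs \<Longrightarrow> BB vs N (fst (vs!t) + s) (snd (vs!t)) = BB vs N (fst (vs!0) + s) (snd (vs!0))"
proof (induction t)
  case 0 show ?case by simp
next
  case (Suc t)
  thus ?case using const_step[OF w per dj, of t] by simp
qed

lemma top_zero:
  assumes "\<forall>v\<in>set vs. snd v \<le> H"
  shows "BB vs N X H = 0"
  unfolding BB_def
proof (rule sum.neutral, rule ballI)
  fix t assume "t \<in> {..<length vs - 1}"
  hence "vs!t \<in> set vs" by auto
  hence "\<not> snd (vs!t) > H" using assms by auto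
  thus "sg vs N X t * (if snd (vs!t) > H then 1 else 0) = 0" by simp
qed

lemma all_zero:
  assumes w: "iwalk vs" "vs \<noteq> []" and per: "snd (last vs) = snd (hd vs)" "(fst (last vs) - fst (hd vs)) mod N = 0"
    and dj: "disj vs N s" and u: "u \<in> set vs"
  shows "BB vs N (fst u + s) (snd u) = 0"
proof -
  define H where "H = Max (snd ` set vs)"
  have fin: "finite (snd ` set vs)" "snd ` set vs \<noteq> {}" using w(2) by auto
  have "H \<in> snd ` set vs" unfolding H_def using fin by (rule Max_in)
  then obtain p where p: "p \<in> set vs" "snd p = H" by auto
  have Hb: "\<forall>v\<in>set vs. snd v \<le> H" unfolding H_def using fin by auto
  obtain t0 where t0: "t0 < length vs" "vs!t0 = p" using p(1) by (auto simp: in_set_conv_nth)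
  obtain t1 where t1: "t1 < length vs" "vs!t1 = u" using u by (auto simp: in_set_conv_nth)
  have "BB vs N (fst u + s) (snd u) = BB vs N (fst (vs!0) + s) (snd (vs!0))"
    using const_all[OF w per dj t1(1)] t1(2) by simp
  also have "\<dots> = BB vs N (fst p + s) (snd p)"
    using const_all[OF w per dj t0(1)] t0(2) by simp
  also have "\<dots> = 0" using p(2) top_zero[OF Hb] by simp
  finally show ?thesis .
qed

lemma mod0_uminus: "(a::int) mod N = 0 \<Longrightarrow> (- a) mod N = 0"
  by (simp add: dvd_eq_mod_eq_0[symmetric])

lemma cylinder:
  assumes w: "iwalk vs" "vs \<noteq> []" and N: "N > 0"
    and last: "last vs = (fst (hd vs) + e * N, snd (hd vs))" and e: "e = 1 \<or> e = -1"
    and dj: "disj vs N s"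
  shows False
proof -
  have per: "snd (last vs) = snd (hd vs)" "(fst (last vs) - fst (hd vs)) mod N = 0" using last by auto
  have dj': "disj vs N (-s)" using disj_neg[OF dj] .
  have D: "\<And>u v. u \<in> set vs \<Longrightarrow> v \<in> set vs \<Longrightarrow> snd u = snd v \<Longrightarrow> (fst v - fst u - s) mod N \<noteq> 0"
  proof -
    fix u v assume a: "u \<in> set vs" "v \<in> set vs" "snd u = snd v"
    show "(fst v - fst u - s) mod N \<noteq> 0" using bspec[OF bspec[OF dj[unfolded disj_def] a(1)] a(2)] a(3) by simp
  qed
  define T where "T = length vs - 1"
  define a where "a t = sg vs N (-s) t" for t
  define c where "c t = sg vs N 0 t" for t
  define y where "y t = snd (vs!t)" for t
  have BB0: "BB vs N x h = (\<Sum>t'<T. sg vs N x t' * (if y t' > h then 1 else 0))" for x h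
    unfolding BB_def T_def y_def by simp
  have wa: "(\<Sum>t<T. a t) = e" unfolding a_def T_def using wind[OF N w(1) w(2)] last by simp
  have wc: "(\<Sum>t<T. c t) = e" unfolding c_def T_def using wind[OF N w(1) w(2)] last by simp
  have S1: "(\<Sum>t<T. a t * BB vs N 0 (y t)) = 0"
  proof (rule sum.neutral, rule ballI)
    fix t assume "t \<in> {..<T}"
    hence t: "Suc t < length vs" unfolding T_def by auto
    show "a t * BB vs N 0 (y t) = 0"
    proof (cases "a t = 0")
      case False
      hence "sg vs N (-s) t \<noteq> 0" unfolding a_def .
      from sg_nz[OF this t] obtain u where u0: "u \<in> set vs" and u1: "(fst u - (-s)) mod N = 0 \<and> snd u = snd (vs!t)"
        by (rule bexE)
      have "(- (fst u + s)) mod N = 0" using u1 mod0_uminus[of "fst u + s" N] by simp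
      hence "BB vs N 0 (y t) = BB vs N (fst u + s) (y t)"
        using BB_period[of 0 "fst u + s" N vs "y t"] by simp
      hence "BB vs N 0 (y t) = BB vs N (fst u + s) (snd u)" using u1 unfolding y_def by simp
      also have "\<dots> = 0" by (rule all_zero[OF w per dj u0])
      finally show ?thesis by simp
    qed simp
  qed
  have S2: "(\<Sum>t<T. c t * BB vs N (-s) (y t)) = 0"
  proof (rule sum.neutral, rule ballI)
    fix t assume "t \<in> {..<T}"
    hence t: "Suc t < length vs" unfolding T_def by auto
    show "c t * BB vs N (-s) (y t) = 0"
    proof (cases "c t = 0")
      case False
      hence "sg vs N 0 t \<noteq> 0" unfolding c_def .
      from sg_nz[OF this t] obtain u where u0: "u \<in> set vs" and u1: "(fst u - 0) mod N = 0 \<and> snd u = snd (vs!t)"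
        by (rule bexE)
      have "(- (fst u)) mod N = 0" using u1 mod0_uminus[of "fst u" N] by simp
      hence "BB vs N (-s) (y t) = BB vs N (fst u + - s) (y t)"
        using BB_period[of "-s" "fst u + - s" N vs "y t"] by simp
      hence "BB vs N (-s) (y t) = BB vs N (fst u + - s) (snd u)" using u1 unfolding y_def by simp
      also have "\<dots> = 0" by (rule all_zero[OF w per dj' u0])
      finally show ?thesis by simp
    qed simp
  qed
  have key: "a t * c t' * ((if y t' > y t then 1 else 0) + (if y t > y t' then 1 else 0)) = a t * c t'"
    if t: "t < T" "t' < T" for t t'
  proof (cases "a t = 0 \<or> c t' = 0")
    case True thus ?thesis by auto
  next
    case False
    have tt: "Suc t < length vs" "Suc t' < length vs" using t unfolding T_def by auto
    from False have "sg vs N (-s) t \<noteq> 0" unfolding a_def by simp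
    from sg_nz[OF this tt(1)] obtain u where u0: "u \<in> set vs" and u1: "(fst u - (-s)) mod N = 0 \<and> snd u = snd (vs!t)"
      by (rule bexE)
    from False have "sg vs N 0 t' \<noteq> 0" unfolding c_def by simp
    from sg_nz[OF this tt(2)] obtain v where v0: "v \<in> set vs" and v1: "(fst v - 0) mod N = 0 \<and> snd v = snd (vs!t')"
      by (rule bexE)
    have "y t \<noteq> y t'"
    proof
      assume "y t = y t'"
      hence "snd u = snd v" using u1 v1 unfolding y_def by simp
      hence ne: "(fst v - fst u - s) mod N \<noteq> 0" using D[OF u0 v0] by simp
      have "N dvd (fst u + s)" "N dvd fst v" using u1 v1 by (auto simp: dvd_eq_mod_eq_0)
      hence "N dvd (fst v - (fst u + s))" by (rule dvd_diff[rotated])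
      hence "(fst v - fst u - s) mod N = 0" by (simp add: dvd_eq_mod_eq_0 algebra_simps)
      with ne show False by simp
    qed
    hence "(if y t' > y t then 1 else 0) + (if y t > y t' then 1 else 0) = (1::int)" by auto
    thus ?thesis by simp
  qed
  have "(\<Sum>t<T. a t * BB vs N 0 (y t)) + (\<Sum>t<T. c t * BB vs N (-s) (y t))
      = (\<Sum>t<T. \<Sum>t'<T. a t * c t' * (if y t' > y t then 1 else 0))
        + (\<Sum>t'<T. \<Sum>t<T. c t' * a t * (if y t > y t' then 1 else 0))"
    unfolding BB0 c_def a_def by (simp add: sum_distrib_left mult.assoc)
  also have "(\<Sum>t'<T. \<Sum>t<T. c t' * a t * (if y t > y t' then 1 else 0))
      = (\<Sum>t<T. \<Sum>t'<T. a t * c t' * (if y t > y t' then 1 else 0))"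
    by (subst sum.swap) (simp add: mult.commute)
  also have "(\<Sum>t<T. \<Sum>t'<T. a t * c t' * (if y t' > y t then 1 else 0)) + \<dots>
      = (\<Sum>t<T. \<Sum>t'<T. a t * c t' * ((if y t' > y t then 1 else 0) + (if y t > y t' then 1 else 0)))"
    by (simp add: sum.distrib[symmetric] distrib_left)
  also have "\<dots> = (\<Sum>t<T. \<Sum>t'<T. a t * c t')"
    using key by (intro sum.cong refl) auto
  also have "\<dots> = (\<Sum>t<T. a t) * (\<Sum>t<T. c t)" by (simp add: sum_product)
  also have "\<dots> = 1" using wa wc e by auto
  finally show False using S1 S2 by simp
qed

definition badl :: "int \<Rightarrow> int \<Rightarrow> bool" where
  "badl d L \<longleftrightarrow> (\<exists>k. k \<ge> 1 \<and> \<bar>\<bar>L\<bar> - k*d\<bar> < k)"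

definition forb :: "int \<Rightarrow> int \<Rightarrow> int \<Rightarrow> bool" where
  "forb d C L \<longleftrightarrow> \<bar>L\<bar> = d \<or> (badl d L \<and> \<bar>L\<bar> \<noteq> C)"

lemma forb_neg: "forb d C (-L) = forb d C L"
  unfolding forb_def badl_def by simp

lemma badlI: "k \<ge> 1 \<Longrightarrow> \<bar>\<bar>L\<bar> - k*d\<bar> < k \<Longrightarrow> badl d L"
  unfolding badl_def by blast

locale cset =
  fixes d C k r :: int
  assumes d: "d \<ge> 1" and k: "k \<ge> 1" and C: "C = k*d + r" and r: "\<bar>r\<bar> < k" and Cd: "C \<noteq> d"
begin

lemma C_ge: "C > d"
proof -
  have "r \<ge> 1 - k" using r by auto
  hence "C \<ge> k*d + 1 - k" using C by simp
  moreover have "k*d + 1 - k - d = (k - 1)*(d - 1)" by (simp add: algebra_simps)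
  moreover have "(k - 1)*(d - 1) \<ge> 0" using k d by simp
  ultimately show ?thesis using Cd by linarith
qed

lemma forb_pos: assumes m: "m \<ge> 1" shows "forb d C (d + C*m)"
proof -
  have "C*m \<ge> C*1" using mult_left_mono[of 1 m C] m C_ge d by simp
  hence pos: "d + C*m > 0" using d C_ge by linarith
  have e: "\<bar>d + C*m\<bar> - (m*k + 1)*d = m * r" using pos C by (simp add: algebra_simps)
  have "\<bar>m * r\<bar> = m * \<bar>r\<bar>" using m by (simp add: abs_mult)
  also have "\<dots> \<le> m * (k - 1)" using m r by (intro mult_left_mono) auto
  also have "\<dots> < m*k + 1" using m by (simp add: algebra_simps)
  finally have "badl d (d + C*m)" using e m k by (intro badlI[of "m*k+1"]) (auto simp: mult_pos_pos)
  moreover have "\<bar>d + C*m\<bar> \<noteq> C"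
  proof -
    have "C*m \<ge> C*1" using mult_left_mono[of 1 m C] m C_ge d by simp
    thus ?thesis using pos d by simp
  qed
  ultimately show ?thesis unfolding forb_def by simp
qed

lemma forb_neg2: assumes m: "m \<ge> 2" shows "forb d C (d - C*m)"
proof -
  have cm: "C*m \<ge> C*2" using mult_left_mono[of 2 m C] m C_ge d by simp
  have pos: "d - C*m < 0" using cm C_ge d by linarith
  have e: "\<bar>d - C*m\<bar> - (m*k - 1)*d = m * r" using pos C by (simp add: algebra_simps)
  have "\<bar>m * r\<bar> = m * \<bar>r\<bar>" using m by (simp add: abs_mult)
  also have "\<dots> \<le> m * (k - 1)" using m r by (intro mult_left_mono) auto
  also have "\<dots> < m*k - 1" using m by (simp add: algebra_simps)
  finally have b: "\<bar>\<bar>d - C*m\<bar> - (m*k - 1)*d\<bar> < m*k - 1" using e by simp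
  have "m*k \<ge> 2*1" using mult_mono[of 2 m 1 k] m k by simp
  hence "badl d (d - C*m)" using b by (intro badlI[of "m*k-1"]) auto
  moreover have "\<bar>d - C*m\<bar> \<noteq> C"
  proof (cases "m = 2")
    case True thus ?thesis using pos Cd by simp
  next
    case False
    hence "C*m \<ge> C*3" using mult_left_mono[of 3 m C] m C_ge d by simp
    hence "\<bar>d - C*m\<bar> > C" using pos C_ge d by linarith
    thus ?thesis by simp
  qed
  ultimately show ?thesis unfolding forb_def by simp
qed

lemma forb_gen: assumes "m \<noteq> -1" shows "forb d C (d + C*m)"
proof -
  consider "m = 0" | "m \<ge> 1" | "m \<le> -2" using assms by linarith
  thus ?thesis
  proof cases
    case 1 thus ?thesis unfolding forb_def using d by simp
  next
    case 2 thus ?thesis by (rule forb_pos)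
  next
    case 3
    have "forb d C (d - C*(-m))" by (rule forb_neg2) (use 3 in simp)
    thus ?thesis by simp
  qed
qed

lemma AL_plus: assumes r1: "r \<ge> 1" shows "forb d C (d + C*m) \<or> forb d C (d + C*m + 1)"
proof (cases "m = -1")
  case False thus ?thesis using forb_gen by simp
next
  case True
  have k2: "k \<ge> 2" using r r1 by simp
  have "\<bar>d + C*m + 1\<bar> = C - d - 1" using True C_ge by simp
  hence e: "\<bar>d + C*m + 1\<bar> - (k - 1)*d = r - 1" using C by (simp add: algebra_simps)
  have "\<bar>r - 1\<bar> < k - 1" using r r1 by simp
  hence "badl d (d + C*m + 1)" using e k2 by (intro badlI[of "k-1"]) auto
  moreover have "\<bar>d + C*m + 1\<bar> \<noteq> C" using True C_ge d by simp
  ultimately show ?thesis unfolding forb_def by simp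
qed

lemma AL_minus: assumes r0: "r \<le> 0" and d2: "r = 0 \<or> d \<ge> 2" shows "forb d C (d + C*m - 1) \<or> forb d C (d + C*m)"
proof (cases "m = -1")
  case False thus ?thesis using forb_gen by simp
next
  case True
  show ?thesis
  proof (cases "r = 0")
    case r00: True
    have k2: "k \<ge> 2" using Cd C r00 k by (cases "k = 1") auto
    have "\<bar>d + C*m\<bar> = C - d" using True C_ge by simp
    hence e: "\<bar>d + C*m\<bar> - (k - 1)*d = r" using C by (simp add: algebra_simps)
    hence "badl d (d + C*m)" using k2 r00 by (intro badlI[of "k-1"]) auto
    moreover have "\<bar>d + C*m\<bar> \<noteq> C" using True C_ge d by simp
    ultimately show ?thesis unfolding forb_def by simp
  next
    case False
    hence r1: "r \<le> -1" using r0 by simp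
    have k2: "k \<ge> 2" using r r1 by simp
    have "\<bar>d + C*m - 1\<bar> = C - d + 1" using True C_ge by simp
    hence e: "\<bar>d + C*m - 1\<bar> - (k - 1)*d = r + 1" using C by (simp add: algebra_simps)
    have "\<bar>r + 1\<bar> < k - 1" using r r1 by simp
    hence "badl d (d + C*m - 1)" using e k2 by (intro badlI[of "k-1"]) auto
    moreover have "\<bar>d + C*m - 1\<bar> \<noteq> C" using True C_ge d d2 False by simp
    ultimately show ?thesis unfolding forb_def by simp
  qed
qed

lemma AR_minus_case:
  assumes sc: "(r \<ge> 1 \<and> s = 2*d+1) \<or> (r \<le> 0 \<and> (r = 0 \<or> d \<ge> 2) \<and> s = 2*d - 1)"
    and h: "(2*A + 1 - s) mod (2*C) = 0"
  shows "forb d C A \<or> forb d C (A+1)"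
proof -
  obtain m where m: "2*A + 1 - s = 2*C*m" using h by (auto simp: dvd_eq_mod_eq_0[symmetric] elim!: dvdE)
  show ?thesis
  proof (cases "r \<ge> 1")
    case r1: True
    hence s1: "s = 2*d+1" using sc by auto
    have "A = d + C*m" using m s1 by (simp add: algebra_simps)
    thus ?thesis using AL_plus[OF r1, of m] by simp
  next
    case False
    hence r0: "r \<le> 0" and d2: "r = 0 \<or> d \<ge> 2" and s1: "s = 2*d - 1" using sc by auto
    have "A + 1 = d + C*m" using m s1 by (simp add: algebra_simps)
    hence "A = d + C*m - 1" by simp
    thus ?thesis using AL_minus[OF r0 d2, of m] by simp
  qed
qed

lemma AR_gen:
  assumes sc: "(r \<ge> 1 \<and> s = 2*d+1) \<or> (r \<le> 0 \<and> (r = 0 \<or> d \<ge> 2) \<and> s = 2*d - 1)"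
    and h: "(2*A + 1 - s) mod (2*C) = 0 \<or> (2*A + 1 + s) mod (2*C) = 0"
  shows "forb d C A \<or> forb d C (A+1)"
  using h
proof
  assume "(2*A + 1 - s) mod (2*C) = 0" thus ?thesis by (rule AR_minus_case[OF sc])
next
  assume h2: "(2*A + 1 + s) mod (2*C) = 0"
  have "2*C dvd (2*A + 1 + s)" using h2 by (simp add: dvd_eq_mod_eq_0)
  hence "2*C dvd (- (2*A + 1 + s))" by (simp only: dvd_minus_iff)
  moreover have e: "2*(-A-1) + 1 - s = - (2*A + 1 + s)" by simp
  ultimately have "(2*(-A-1) + 1 - s) mod (2*C) = 0" unfolding e by (simp only: dvd_eq_mod_eq_0)
  hence "forb d C (-A-1) \<or> forb d C (-A-1+1)" by (rule AR_minus_case[OF sc])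
  moreover have "forb d C (-A-1) = forb d C (A+1)" using forb_neg[of d C "A+1"] by simp
  moreover have "forb d C (-A-1+1) = forb d C A" using forb_neg[of d C A] by simp
  ultimately show ?thesis by blast
qed

end

definition padd :: "int \<times> int \<Rightarrow> int \<times> int \<Rightarrow> int \<times> int" where
  "padd p q = (fst p + fst q, snd p + snd q)"
definition dbl :: "int \<times> int \<Rightarrow> int \<times> int" where
  "dbl p = (2 * fst p, 2 * snd p)"

definition dw :: "(int \<times> int) list \<Rightarrow> nat \<Rightarrow> nat \<Rightarrow> (int \<times> int) list" where
  "dw ws i j = map (\<lambda>m. if even m then dbl (ws!(i + m div 2)) else padd (ws!(i + m div 2)) (ws!(i + m div 2 + 1)))
     [0..<2*(j-i)+1]"

lemma dw_length: "length (dw ws i j) = 2*(j-i)+1"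
  unfolding dw_def by simp

lemma dw_nth: "m < 2*(j-i)+1 \<Longrightarrow> dw ws i j ! m =
   (if even m then dbl (ws!(i + m div 2)) else padd (ws!(i + m div 2)) (ws!(i + m div 2 + 1)))"
  unfolding dw_def by (simp del: upt_Suc)

lemma adj_dbl_padd: "adj p q \<Longrightarrow> adj (dbl p) (padd p q)"
  unfolding adj_def dbl_def padd_def by auto

lemma adj_padd_dbl: "adj p q \<Longrightarrow> adj (padd p q) (dbl q)"
  unfolding adj_def dbl_def padd_def by auto

lemma dw_walk:
  assumes w: "iwalk ws" and ij: "i \<le> j" "j < length ws"
  shows "iwalk (dw ws i j)"
  unfolding iwalk_def dw_length
proof (intro allI impI)
  fix m assume m: "Suc m < 2 * (j - i) + 1"
  define a where "a = m div 2"
  have ad: "adj (ws!(i+a)) (ws!Suc (i+a))"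
  proof -
    have "Suc (i + a) < length ws" using m ij unfolding a_def by linarith
    thus ?thesis using w unfolding iwalk_def by blast
  qed
  show "adj (dw ws i j ! m) (dw ws i j ! Suc m)"
  proof (cases "even m")
    case True
    have "dw ws i j ! m = dbl (ws!(i+a))" using m True unfolding a_def by (simp add: dw_nth)
    moreover have "dw ws i j ! Suc m = padd (ws!(i+a)) (ws!Suc (i+a))"
      using m True unfolding a_def by (simp add: dw_nth)
    ultimately show ?thesis using adj_dbl_padd[OF ad] by simp
  next
    case False
    have "Suc m div 2 = Suc a" using False unfolding a_def by presburger
    hence "dw ws i j ! Suc m = dbl (ws!Suc (i+a))" using m False by (simp add: dw_nth)
    moreover have "dw ws i j ! m = padd (ws!(i+a)) (ws!Suc (i+a))"
      using m False unfolding a_def by (simp add: dw_nth)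
    ultimately show ?thesis using adj_padd_dbl[OF ad] by simp
  qed
qed

lemma dw_ne: "dw ws i j \<noteq> []"
  using dw_length[of ws i j] by (metis add_is_0 length_0_conv one_neq_zero)

lemma dw_hd: "hd (dw ws i j) = dbl (ws!i)"
  using dw_ne[of ws i j] by (simp add: hd_conv_nth dw_nth)

lemma dw_last: "i \<le> j \<Longrightarrow> last (dw ws i j) = dbl (ws!j)"
  using dw_ne[of ws i j] by (simp add: last_conv_nth dw_length dw_nth)

lemma dw_mem:
  assumes "v \<in> set (dw ws i j)" and ij: "i \<le> j"
  shows "(\<exists>t. i \<le> t \<and> t \<le> j \<and> v = dbl (ws!t)) \<or> (\<exists>t. i \<le> t \<and> t < j \<and> v = padd (ws!t) (ws!Suc t))"
proof -
  obtain m where m: "m < 2*(j-i)+1" "v = dw ws i j ! m" using assms by (auto simp: in_set_conv_nth dw_length)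
  show ?thesis
  proof (cases "even m")
    case True
    hence "v = dbl (ws!(i + m div 2))" using m by (simp add: dw_nth)
    moreover have "i \<le> i + m div 2 \<and> i + m div 2 \<le> j" using m(1) ij by auto
    ultimately show ?thesis by blast
  next
    case False
    hence "v = padd (ws!(i + m div 2)) (ws!Suc (i + m div 2))" using m by (simp add: dw_nth)
    moreover have "i \<le> i + m div 2 \<and> i + m div 2 < j" using m(1) False ij by presburger
    ultimately show ?thesis by blast
  qed
qed

lemma adj_parity:
  assumes "adj q q'"
  shows "(snd q = snd q' \<and> (fst q' = fst q + 1 \<or> fst q = fst q' + 1)) \<or> (fst q = fst q' \<and> odd (snd q + snd q'))"
  using assms
proof (cases rule: adj_cases)
  case U
  hence "snd q + snd q' = 2 * snd q + 1" by simp
  hence "odd (snd q + snd q')" by presburger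
  thus ?thesis using U by simp
next
  case D
  hence "snd q + snd q' = 2 * snd q' + 1" by simp
  hence "odd (snd q + snd q')" by presburger
  thus ?thesis using D by simp
qed auto

lemma padd_par: assumes "adj q q'"
  shows "(odd (fst (padd q q')) \<and> even (snd (padd q q'))) \<or> (even (fst (padd q q')) \<and> odd (snd (padd q q')))"
  using adj_parity[OF assms]
proof (elim disjE conjE)
  assume "snd q = snd q'" "fst q' = fst q + 1"
  thus ?thesis unfolding padd_def by simp
next
  assume "snd q = snd q'" "fst q = fst q' + 1"
  thus ?thesis unfolding padd_def by simp
next
  assume "fst q = fst q'" "odd (snd q + snd q')"
  thus ?thesis unfolding padd_def by simp
qed

lemma dw_disj:
  assumes w: "iwalk ws" and ij: "i \<le> j" "j < length ws"
    and s: "odd s" and N: "even N"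
    and NF: "\<forall>t t'. i \<le> t \<longrightarrow> t \<le> j \<longrightarrow> i \<le> t' \<longrightarrow> t' \<le> j \<longrightarrow> snd (ws!t) = snd (ws!t') \<longrightarrow> \<not> F (fst (ws!t') - fst (ws!t))"
    and AR: "\<forall>A. (2*A + 1 - s) mod N = 0 \<or> (2*A + 1 + s) mod N = 0 \<longrightarrow> F A \<or> F (A+1)"
  shows "disj (dw ws i j) N s"
  unfolding disj_def
proof (intro ballI impI notI)
  fix u v assume u: "u \<in> set (dw ws i j)" and v: "v \<in> set (dw ws i j)" and sn: "snd u = snd v"
    and md: "(fst v - fst u - s) mod N = 0"
  have NF': "\<And>t t'. i \<le> t \<Longrightarrow> t \<le> j \<Longrightarrow> i \<le> t' \<Longrightarrow> t' \<le> j \<Longrightarrow> snd (ws!t) = snd (ws!t') \<Longrightarrow> \<not> F (fst (ws!t') - fst (ws!t))"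
    using NF by simp
  have AR': "\<And>A. (2*A + 1 - s) mod N = 0 \<or> (2*A + 1 + s) mod N = 0 \<Longrightarrow> F A \<or> F (A+1)"
    by (rule mp[OF spec[OF AR]])
  have "N dvd (fst v - fst u - s)" using md by (simp add: dvd_eq_mod_eq_0)
  hence "even (fst v - fst u - s)" using N by (metis dvd_trans)
  hence oddd: "odd (fst v - fst u)" using s by presburger
  have adjt: "adj (ws!t) (ws!Suc t)" if "t < j" for t
    using w ij that unfolding iwalk_def by auto
  \<comment> \<open>key case: one doubled vertex p, one horizontal midpoint q q'\<close>
  have keycase: False if t: "i \<le> t" "t \<le> j" and t': "i \<le> t'" "t' < j"
     and hs: "snd (ws!t) = snd (ws!t')" "snd (ws!t') = snd (ws!Suc t')"
     and h1: "fst (ws!Suc t') = fst (ws!t') + 1 \<or> fst (ws!t') = fst (ws!Suc t') + 1"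
     and mm: "(fst (ws!t') + fst (ws!Suc t') - 2 * fst (ws!t) - s) mod N = 0 \<or>
              (fst (ws!t') + fst (ws!Suc t') - 2 * fst (ws!t) + s) mod N = 0" for t t'
  proof -
    define A where "A = fst (ws!t') - fst (ws!t)"
    define A' where "A' = fst (ws!Suc t') - fst (ws!t)"
    have nA: "\<not> F A" unfolding A_def using NF'[of t t'] t t' hs by simp
    have nA': "\<not> F A'" unfolding A'_def using NF'[of t "Suc t'"] t t' hs by simp
    have sum: "fst (ws!t') + fst (ws!Suc t') - 2 * fst (ws!t) = A + A'" unfolding A_def A'_def by simp
    from h1 show False
    proof
      assume "fst (ws!Suc t') = fst (ws!t') + 1"
      hence "A' = A + 1" unfolding A_def A'_def by simp
      hence "(2*A + 1 - s) mod N = 0 \<or> (2*A + 1 + s) mod N = 0" using mm sum by (simp add: algebra_simps)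
      hence "F A \<or> F (A+1)" by (rule AR')
      thus False using nA nA' \<open>A' = A + 1\<close> by simp
    next
      assume "fst (ws!t') = fst (ws!Suc t') + 1"
      hence "A = A' + 1" unfolding A_def A'_def by simp
      hence "(2*A' + 1 - s) mod N = 0 \<or> (2*A' + 1 + s) mod N = 0" using mm sum by (simp add: algebra_simps)
      hence "F A' \<or> F (A'+1)" by (rule AR')
      thus False using nA nA' \<open>A = A' + 1\<close> by simp
    qed
  qed
  have mdneg: "(- (fst v - fst u - s)) mod N = 0" by (rule mod0_uminus[OF md])
  from dw_mem[OF u ij(1)] dw_mem[OF v ij(1)] show False
  proof (elim disjE exE conjE)
    fix t t' assume "v = dbl (ws!t')" "u = dbl (ws!t)"
    hence "fst v - fst u = 2 * (fst (ws!t') - fst (ws!t))" unfolding dbl_def by simp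
    thus False using oddd by simp
  next
    fix t t' assume a: "i \<le> t" "t \<le> j" "u = dbl (ws!t)" "i \<le> t'" "t' < j" "v = padd (ws!t') (ws!Suc t')"
    from adj_parity[OF adjt[OF a(5)]] show False
    proof
      assume h: "snd (ws!t') = snd (ws!Suc t') \<and> (fst (ws!Suc t') = fst (ws!t') + 1 \<or> fst (ws!t') = fst (ws!Suc t') + 1)"
      have c1: "snd (ws!t) = snd (ws!t')" using sn h a unfolding dbl_def padd_def by simp
      have c2: "(fst (ws!t') + fst (ws!Suc t') - 2 * fst (ws!t) - s) mod N = 0"
        using md a unfolding dbl_def padd_def by simp
      show False by (rule keycase[OF a(1,2,4,5) c1 conjunct1[OF h] conjunct2[OF h]]) (use c2 in simp)
    next
      assume h: "fst (ws!t') = fst (ws!Suc t') \<and> odd (snd (ws!t') + snd (ws!Suc t'))"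
      have "snd u = 2 * snd (ws!t)" using a unfolding dbl_def by simp
      moreover have "snd v = snd (ws!t') + snd (ws!Suc t')" using a unfolding padd_def by simp
      ultimately show False using sn h by presburger
    qed
  next
    fix t t' assume a: "i \<le> t" "t \<le> j" "v = dbl (ws!t)" "i \<le> t'" "t' < j" "u = padd (ws!t') (ws!Suc t')"
    from adj_parity[OF adjt[OF a(5)]] show False
    proof
      assume h: "snd (ws!t') = snd (ws!Suc t') \<and> (fst (ws!Suc t') = fst (ws!t') + 1 \<or> fst (ws!t') = fst (ws!Suc t') + 1)"
      have c1: "snd (ws!t) = snd (ws!t')" using sn h a unfolding dbl_def padd_def by simp
      have c2: "(fst (ws!t') + fst (ws!Suc t') - 2 * fst (ws!t) + s) mod N = 0"
        using mdneg a unfolding dbl_def padd_def by (simp add: algebra_simps)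
      show False by (rule keycase[OF a(1,2,4,5) c1 conjunct1[OF h] conjunct2[OF h]]) (use c2 in simp)
    next
      assume h: "fst (ws!t') = fst (ws!Suc t') \<and> odd (snd (ws!t') + snd (ws!Suc t'))"
      have "snd v = 2 * snd (ws!t)" using a unfolding dbl_def by simp
      moreover have "snd u = snd (ws!t') + snd (ws!Suc t')" using a unfolding padd_def by simp
      ultimately show False using sn h by presburger
    qed
  next
    fix t t' assume a: "i \<le> t" "t < j" "u = padd (ws!t) (ws!Suc t)" "i \<le> t'" "t' < j" "v = padd (ws!t') (ws!Suc t')"
    have pu: "(odd (fst u) \<and> even (snd u)) \<or> (even (fst u) \<and> odd (snd u))"
      using padd_par[OF adjt[OF a(2)]] a(3) by simp
    have pv: "(odd (fst v) \<and> even (snd v)) \<or> (even (fst v) \<and> odd (snd v))"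
      using padd_par[OF adjt[OF a(5)]] a(6) by simp
    show False using pu pv sn oddd by auto
  qed
qed

lemma badl_abs: "badl d (-L) = badl d L"
  unfolding badl_def by simp

lemma badl_zero: "d \<ge> 1 \<Longrightarrow> \<not> badl d 0"
proof
  assume d: "d \<ge> 1" and "badl d 0"
  then obtain k where k: "k \<ge> 1" "\<bar>\<bar>0::int\<bar> - k*d\<bar> < k" unfolding badl_def by blast
  have "k*d \<ge> k*1" using mult_left_mono[of 1 d k] k d by simp
  thus False using k by simp
qed

theorem unavoid_int:
  fixes ws :: "(int \<times> int) list" and d :: int
  assumes w: "iwalk ws" and d: "d \<ge> 1"
  shows "i \<le> j \<Longrightarrow> j < length ws \<Longrightarrow> snd (ws!i) = snd (ws!j) \<Longrightarrow> badl d (fst (ws!j) - fst (ws!i)) \<Longrightarrow>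
     \<exists>t u. t < length ws \<and> u < length ws \<and> snd (ws!t) = snd (ws!u) \<and> fst (ws!t) - fst (ws!u) = d"
proof (induction "j - i" arbitrary: i j rule: less_induct)
  case (less i j)
  show ?case
  proof (rule ccontr)
    assume NC: "\<not> (\<exists>t u. t < length ws \<and> u < length ws \<and> snd (ws!t) = snd (ws!u) \<and> fst (ws!t) - fst (ws!u) = d)"
    define c where "c = fst (ws!j) - fst (ws!i)"
    define C where "C = \<bar>c\<bar>"
    have NF: "\<forall>t t'. i \<le> t \<longrightarrow> t \<le> j \<longrightarrow> i \<le> t' \<longrightarrow> t' \<le> j \<longrightarrow> snd (ws!t) = snd (ws!t') \<longrightarrow>
        \<not> forb d C (fst (ws!t') - fst (ws!t))"
    proof (intro allI impI notI)
      fix t t' assume tt: "i \<le> t" "t \<le> j" "i \<le> t'" "t' \<le> j" and sn: "snd (ws!t) = snd (ws!t')"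
        and fb: "forb d C (fst (ws!t') - fst (ws!t))"
      have lt: "t < length ws" "t' < length ws" using tt less.prems by auto
      from fb consider (a) "\<bar>fst (ws!t') - fst (ws!t)\<bar> = d"
        | (b) "badl d (fst (ws!t') - fst (ws!t))" "\<bar>fst (ws!t') - fst (ws!t)\<bar> \<noteq> C"
        unfolding forb_def by blast
      thus False
      proof cases
        case a
        show False
        proof (cases "fst (ws!t') - fst (ws!t) = d")
          case True thus False using NC lt sn by auto
        next
          case False
          hence "fst (ws!t) - fst (ws!t') = d" using a by auto
          thus False using NC lt sn by auto
        qed
      next
        case b
        define a where "a = min t t'"
        define b where "b = max t t'"
        have ab: "i \<le> a" "a \<le> b" "b \<le> j" unfolding a_def b_def using tt by auto
        have "\<not> (a = i \<and> b = j)"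
        proof
          assume "a = i \<and> b = j"
          hence "(t = i \<and> t' = j) \<or> (t = j \<and> t' = i)" unfolding a_def b_def by (auto simp: min_def max_def split: if_splits)
          thus False using b(2) unfolding C_def c_def by auto
        qed
        hence lt2: "b - a < j - i" using ab by auto
        have snab: "snd (ws!a) = snd (ws!b)" unfolding a_def b_def using sn by (auto simp: min_def max_def)
        have bab: "badl d (fst (ws!b) - fst (ws!a))"
        proof (cases "t \<le> t'")
          case True thus ?thesis unfolding a_def b_def using b(1) by simp
        next
          case False
          hence "fst (ws!b) - fst (ws!a) = - (fst (ws!t') - fst (ws!t))" unfolding a_def b_def by simp
          thus ?thesis using b(1) badl_abs[of d "fst (ws!t') - fst (ws!t)"] by simp
        qed
        have "\<exists>t u. t < length ws \<and> u < length ws \<and> snd (ws!t) = snd (ws!u) \<and> fst (ws!t) - fst (ws!u) = d"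
          by (rule less.hyps[OF lt2 ab(2)]) (use ab less.prems snab bab in auto)
        thus False using NC by blast
      qed
    qed
    have bc: "badl d c" using less.prems(4) unfolding c_def .
    have c0: "c \<noteq> 0" using bc badl_zero[OF d] by auto
    have Cd: "C \<noteq> d"
    proof
      assume "C = d"
      hence "c = d \<or> c = -d" unfolding C_def by auto
      thus False
      proof
        assume "c = d" thus False using NC less.prems unfolding c_def by auto
      next
        assume "c = -d" hence "fst (ws!i) - fst (ws!j) = d" unfolding c_def by simp
        thus False using NC less.prems by auto
      qed
    qed
    obtain k where k: "k \<ge> 1" "\<bar>C - k*d\<bar> < k" using bc unfolding badl_def C_def by blast
    define k0 where "k0 = (if d = 1 then C else k)"
    define r0 where "r0 = (if d = 1 then 0 else C - k*d)"
    have Cpos: "C \<ge> 1" using c0 unfolding C_def by auto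
    interpret cs: cset d C k0 r0
      by unfold_locales (use d k Cd Cpos in \<open>auto simp: k0_def r0_def\<close>)
    define s where "s = (if r0 \<ge> 1 then 2*d+1 else 2*d - 1)"
    have sc: "(r0 \<ge> 1 \<and> s = 2*d+1) \<or> (r0 \<le> 0 \<and> (r0 = 0 \<or> d \<ge> 2) \<and> s = 2*d - 1)"
      unfolding s_def r0_def using d by auto
    define N where "N = 2*C"
    define vs where "vs = dw ws i j"
    have ij: "i \<le> j" "j < length ws" using less.prems by auto
    have vw: "iwalk vs" unfolding vs_def by (rule dw_walk[OF w ij])
    have vne: "vs \<noteq> []" unfolding vs_def by (rule dw_ne)
    have Npos: "N > 0" unfolding N_def using Cpos by simp
    define e where "e = (if c > 0 then 1 else -1 :: int)"
    have eN: "e * N = 2*c" unfolding e_def N_def C_def using c0 by auto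
    have lst: "last vs = (fst (hd vs) + e * N, snd (hd vs))"
      unfolding vs_def dw_hd dw_last[OF ij(1)] eN using less.prems(3) unfolding dbl_def c_def by simp
    have dj: "disj vs N s" unfolding vs_def
    proof (rule dw_disj[OF w ij, where F = "forb d C"])
      show "odd s" unfolding s_def by simp
      show "even N" unfolding N_def by simp
      show "\<forall>t t'. i \<le> t \<longrightarrow> t \<le> j \<longrightarrow> i \<le> t' \<longrightarrow> t' \<le> j \<longrightarrow> snd (ws!t) = snd (ws!t') \<longrightarrow>
        \<not> forb d C (fst (ws!t') - fst (ws!t))" by (rule NF)
      show "\<forall>A. (2*A + 1 - s) mod N = 0 \<or> (2*A + 1 + s) mod N = 0 \<longrightarrow> forb d C A \<or> forb d C (A+1)"
        unfolding N_def using cs.AR_gen[OF sc] by blast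
    qed
    show False by (rule cylinder[OF vw vne Npos lst _ dj]) (simp add: e_def)
  qed
qed

definition seg :: "int \<Rightarrow> int \<Rightarrow> int \<Rightarrow> (int \<times> int) list" where
  "seg a b x = map (\<lambda>t. (x, a + sgn (b - a) * int t)) [0..<nat \<bar>b - a\<bar> + 1]"

lemma seg_ne: "seg a b x \<noteq> []" unfolding seg_def by simp

lemma seg_hd: "hd (seg a b x) = (x, a)"
  unfolding seg_def by (simp add: hd_map upt_rec)

lemma seg_last: "last (seg a b x) = (x, b)"
proof -
  have "last (seg a b x) = (x, a + sgn (b - a) * int (nat \<bar>b - a\<bar>))"
    unfolding seg_def by (simp add: last_map)
  also have "sgn (b - a) * int (nat \<bar>b - a\<bar>) = b - a" by (simp add: sgn_mult_abs)
  finally show ?thesis by simp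
qed

lemma seg_walk: "iwalk (seg a b x)"
  unfolding iwalk_def
proof (intro allI impI)
  fix t assume t: "Suc t < length (seg a b x)"
  hence "a \<noteq> b" unfolding seg_def by simp
  hence "\<bar>sgn (b - a)\<bar> = 1" by (simp add: abs_sgn)
  moreover have "seg a b x ! t = (x, a + sgn (b - a) * int t)" "seg a b x ! Suc t = (x, a + sgn (b - a) * int (Suc t))"
    using t unfolding seg_def by (simp_all del: upt_Suc)
  ultimately show "adj (seg a b x ! t) (seg a b x ! Suc t)" unfolding adj_def by (simp add: algebra_simps)
qed

lemma seg_set: "set (seg a b x) = {p. fst p = x \<and> min a b \<le> snd p \<and> snd p \<le> max a b}"
proof
  show "set (seg a b x) \<subseteq> {p. fst p = x \<and> min a b \<le> snd p \<and> snd p \<le> max a b}"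
  proof
    fix p assume "p \<in> set (seg a b x)"
    hence "p \<in> (\<lambda>t. (x, a + sgn (b - a) * int t)) ` {0..<nat \<bar>b - a\<bar> + 1}"
      unfolding seg_def by (simp del: upt_Suc)
    then obtain t where t: "t < nat \<bar>b - a\<bar> + 1" "p = (x, a + sgn (b - a) * int t)" by auto
    have tl: "int t \<le> \<bar>b - a\<bar>" using t(1) by simp
    have fp: "fst p = x" and sp: "snd p = a + sgn (b - a) * int t" using t(2) by simp_all
    consider (lt) "a < b" | (eq) "a = b" | (gt) "a > b" by linarith
    hence "min a b \<le> snd p \<and> snd p \<le> max a b"
    proof cases
      case lt
      hence "sgn (b - a) = 1" by simp
      thus ?thesis using sp tl lt by simp
    next
      case eq thus ?thesis using sp tl by simp
    next
      case gt
      hence "sgn (b - a) = -1" by simp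
      thus ?thesis using sp tl gt by simp
    qed
    thus "p \<in> {p. fst p = x \<and> min a b \<le> snd p \<and> snd p \<le> max a b}" using fp by simp
  qed
next
  show "{p. fst p = x \<and> min a b \<le> snd p \<and> snd p \<le> max a b} \<subseteq> set (seg a b x)"
  proof
    fix p assume p: "p \<in> {p. fst p = x \<and> min a b \<le> snd p \<and> snd p \<le> max a b}"
    hence fp: "fst p = x" and mn: "min a b \<le> snd p" and mx: "snd p \<le> max a b" by auto
    define t where "t = nat \<bar>snd p - a\<bar>"
    consider (lt) "a < b" | (eq) "a = b" | (gt) "a > b" by linarith
    hence tt: "t < nat \<bar>b - a\<bar> + 1 \<and> snd p = a + sgn (b - a) * int t"
    proof cases
      case lt
      hence "sgn (b - a) = 1" "min a b = a" "max a b = b" by auto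
      thus ?thesis using mn mx lt unfolding t_def by simp
    next
      case eq
      thus ?thesis using mn mx unfolding t_def by simp
    next
      case gt
      hence "sgn (b - a) = -1" "min a b = b" "max a b = a" by auto
      thus ?thesis using mn mx gt unfolding t_def by simp
    qed
    have "p = (x, a + sgn (b - a) * int t)" using tt fp by (simp add: prod_eq_iff)
    hence "p \<in> (\<lambda>t. (x, a + sgn (b - a) * int t)) ` {0..<nat \<bar>b - a\<bar> + 1}" using tt by auto
    thus "p \<in> set (seg a b x)" unfolding seg_def by (simp del: upt_Suc)
  qed
qed

lemma iwalk_append:
  assumes "iwalk xs" "iwalk ys" "xs \<noteq> []" "ys \<noteq> []" "adj (last xs) (hd ys)"
  shows "iwalk (xs @ ys)"
  unfolding iwalk_def
proof (intro allI impI)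
  fix t assume t: "Suc t < length (xs @ ys)"
  consider "Suc t < length xs" | "Suc t = length xs" | "length xs \<le> t" by linarith
  thus "adj ((xs @ ys) ! t) ((xs @ ys) ! Suc t)"
  proof cases
    case 1 thus ?thesis using assms(1) unfolding iwalk_def by (simp add: nth_append)
  next
    case 2
    hence tt: "t = length xs - 1" by simp
    have "(xs @ ys) ! t = last xs" using 2 assms(3) tt by (simp add: nth_append last_conv_nth)
    moreover have "(xs @ ys) ! Suc t = hd ys" using 2 assms(4) by (simp add: nth_append hd_conv_nth)
    ultimately show ?thesis using assms(5) by simp
  next
    case 3
    have "Suc (t - length xs) < length ys" using t 3 by simp
    hence "adj (ys ! (t - length xs)) (ys ! Suc (t - length xs))" using assms(2) unfolding iwalk_def by blast
    moreover have "Suc t - length xs = Suc (t - length xs)" using 3 by simp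
    ultimately show ?thesis using 3 by (simp add: nth_append)
  qed
qed

fun cw :: "(int \<Rightarrow> int) \<Rightarrow> nat \<Rightarrow> (int \<times> int) list" where
  "cw sv 0 = seg (sv (-1)) (sv 0) 0"
| "cw sv (Suc k) = cw sv k @ seg (sv (int k)) (sv (int (Suc k))) (int (Suc k))"

lemma cw_props: "cw sv k \<noteq> [] \<and> hd (cw sv k) = (0, sv (-1)) \<and> last (cw sv k) = (int k, sv (int k)) \<and> iwalk (cw sv k)
   \<and> set (cw sv k) = {p. 0 \<le> fst p \<and> fst p \<le> int k \<and> min (sv (fst p - 1)) (sv (fst p)) \<le> snd p \<and> snd p \<le> max (sv (fst p - 1)) (sv (fst p))}"
proof (induction k)
  case 0
  show ?case by (auto simp: seg_ne seg_hd seg_last seg_walk seg_set)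
next
  case (Suc k)
  have ad: "adj (last (cw sv k)) (hd (seg (sv (int k)) (sv (int (Suc k))) (int (Suc k))))"
    using Suc.IH unfolding adj_def by (simp add: seg_hd)
  have w: "iwalk (cw sv (Suc k))" using iwalk_append[OF _ seg_walk _ seg_ne ad] Suc.IH by simp
  have st: "set (cw sv (Suc k)) = {p. 0 \<le> fst p \<and> fst p \<le> int (Suc k) \<and> min (sv (fst p - 1)) (sv (fst p)) \<le> snd p \<and> snd p \<le> max (sv (fst p - 1)) (sv (fst p))}"
    (is "_ = ?R")
  proof -
    have "set (cw sv (Suc k)) = set (cw sv k) \<union> set (seg (sv (int k)) (sv (int (Suc k))) (int (Suc k)))" by simp
    also have "\<dots> = {p. 0 \<le> fst p \<and> fst p \<le> int k \<and> min (sv (fst p - 1)) (sv (fst p)) \<le> snd p \<and> snd p \<le> max (sv (fst p - 1)) (sv (fst p))}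
       \<union> {p. fst p = int (Suc k) \<and> min (sv (int k)) (sv (int (Suc k))) \<le> snd p \<and> snd p \<le> max (sv (int k)) (sv (int (Suc k)))}"
      using Suc.IH seg_set by simp
    also have "\<dots> = ?R"
    proof (intro equalityI subsetI)
      fix p assume "p \<in> ?R"
      thus "p \<in> {p. 0 \<le> fst p \<and> fst p \<le> int k \<and> min (sv (fst p - 1)) (sv (fst p)) \<le> snd p \<and> snd p \<le> max (sv (fst p - 1)) (sv (fst p))}
       \<union> {p. fst p = int (Suc k) \<and> min (sv (int k)) (sv (int (Suc k))) \<le> snd p \<and> snd p \<le> max (sv (int k)) (sv (int (Suc k)))}"
      proof (cases "fst p \<le> int k")
        case True thus ?thesis using \<open>p \<in> ?R\<close> by auto
      next
        case False
        hence e: "fst p = int k + 1" using \<open>p \<in> ?R\<close> by auto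
        have "min (sv (int k)) (sv (int k + 1)) \<le> snd p \<and> snd p \<le> max (sv (int k)) (sv (int k + 1))"
          using \<open>p \<in> ?R\<close> e by simp
        thus ?thesis using e by (simp add: add.commute)
      qed
    qed auto
    finally show ?thesis .
  qed
  have hd1: "hd (cw sv (Suc k)) = (0, sv (-1))" using Suc.IH by (simp add: hd_append)
  have lst: "last (cw sv (Suc k)) = (int (Suc k), sv (int (Suc k)))" by (simp add: seg_last seg_ne)
  have ne: "cw sv (Suc k) \<noteq> []" by (simp add: seg_ne)
  show ?case using ne hd1 lst w st by (intro conjI)
qed

lemma construct_walk:
  fixes sv :: "int \<Rightarrow> int" and n d :: int
  assumes n: "n \<ge> 0" and e: "sv (-1) = sv n"
    and dec: "\<And>x a b. 0 \<le> x \<Longrightarrow> x + d \<le> n \<Longrightarrow> a \<in> {x - 1, x} \<Longrightarrow> b \<in> {x + d - 1, x + d} \<Longrightarrow> sv b < sv a"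
  shows "\<exists>ws. iwalk ws \<and> ws \<noteq> [] \<and> (0, sv (-1)) \<in> set ws \<and> (n, sv (-1)) \<in> set ws \<and>
     (\<forall>p\<in>set ws. \<forall>q\<in>set ws. snd p = snd q \<longrightarrow> fst q - fst p \<noteq> d)"
proof -
  define ws where "ws = cw sv (nat n)"
  have P: "ws \<noteq> [] \<and> hd ws = (0, sv (-1)) \<and> last ws = (n, sv n) \<and> iwalk ws
    \<and> set ws = {p. 0 \<le> fst p \<and> fst p \<le> n \<and> min (sv (fst p - 1)) (sv (fst p)) \<le> snd p \<and> snd p \<le> max (sv (fst p - 1)) (sv (fst p))}"
    unfolding ws_def using cw_props[of sv "nat n"] n by simp
  have nc: "\<forall>p\<in>set ws. \<forall>q\<in>set ws. snd p = snd q \<longrightarrow> fst q - fst p \<noteq> d"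
  proof (intro ballI impI notI)
    fix p q assume p: "p \<in> set ws" and q: "q \<in> set ws" and sn: "snd p = snd q" and df: "fst q - fst p = d"
    define x where "x = fst p"
    have fq: "fst q = x + d" using df unfolding x_def by simp
    have x0: "0 \<le> x" "x + d \<le> n" using p q P fq unfolding x_def by auto
    have h1: "min (sv (x - 1)) (sv x) \<le> snd p" using p P unfolding x_def by auto
    have h2: "snd q \<le> max (sv (x + d - 1)) (sv (x + d))" using q P fq by auto
    have "sv (x + d - 1) < sv (x - 1)" "sv (x + d - 1) < sv x" "sv (x + d) < sv (x - 1)" "sv (x + d) < sv x"
      using dec[OF x0] by auto
    thus False using h1 h2 sn by linarith
  qed
  have ne: "ws \<noteq> []" using P by simp
  have "hd ws \<in> set ws" "last ws \<in> set ws" using ne by simp_all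
  thus ?thesis using P nc e n by (intro exI[of _ ws]) auto
qed

lemma modhelp: "0 \<le> r \<Longrightarrow> r < (N::int) \<Longrightarrow> (N*q + r) mod N = r"
  by (metis add.commute mod_mult_self2 mod_pos_pos_trivial mult.commute)

lemma divmodhelp: "0 \<le> r \<Longrightarrow> r < (N::int) \<Longrightarrow> (N*q + r) div N = q \<and> (N*q + r) mod N = r"
  using divhelp modhelp by blast

definition ff :: "int \<Rightarrow> int \<Rightarrow> int \<Rightarrow> int" where
  "ff d M \<rho> = min (\<rho>*(M-1)) ((d-1-\<rho>)*(M-1) - M)"

definition FF :: "int \<Rightarrow> int \<Rightarrow> int \<Rightarrow> int" where
  "FF d M a = ff d M (a mod d) - (a div d) * M"

definition svf :: "int \<Rightarrow> int \<Rightarrow> int \<Rightarrow> int \<Rightarrow> int" where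
  "svf d M n j = (if j = -1 \<or> j = n then 1 - M else FF d M j)"

lemma min_shift: "(c::int) \<ge> 0 \<Longrightarrow> min (A + c) (B - c) \<le> min A B + c"
  by (simp add: min_def)

lemma min_shift2: "(c::int) \<ge> 0 \<Longrightarrow> min (A - c) (B + c) \<le> min A B + c"
  by (simp add: min_def)

lemma ff_lip1: assumes "M \<ge> 1" shows "ff d M (\<rho>+1) \<le> ff d M \<rho> + (M - 1)"
proof -
  have e1: "(\<rho>+1)*(M-1) = \<rho>*(M-1) + (M-1)" by (simp add: algebra_simps)
  have e2: "(d-1-(\<rho>+1))*(M-1) - M = ((d-1-\<rho>)*(M-1) - M) - (M-1)" by (simp add: algebra_simps)
  show ?thesis unfolding ff_def e1 e2 by (rule min_shift) (use assms in simp)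
qed

lemma ff_lip2: assumes "M \<ge> 1" shows "ff d M (\<rho>-1) \<le> ff d M \<rho> + (M - 1)"
proof -
  have e1: "(\<rho>-1)*(M-1) = \<rho>*(M-1) - (M-1)" by (simp add: algebra_simps)
  have e2: "(d-1-(\<rho>-1))*(M-1) - M = ((d-1-\<rho>)*(M-1) - M) + (M-1)" by (simp add: algebra_simps)
  show ?thesis unfolding ff_def e1 e2 by (rule min_shift2) (use assms in simp)
qed

lemma FF_dec:
  assumes d: "d \<ge> 3" and M: "M \<ge> 2" and dM: "(d-1)*(M-1) \<ge> M" and \<delta>: "\<delta> \<in> {d-1, d, d+1}"
  shows "FF d M (a + \<delta>) < FF d M a"
proof -
  have f0: "ff d M 0 = 0" unfolding ff_def using dM by simp
  have fd: "ff d M (d-1) = -M"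
  proof -
    have "(d-1)*(M-1) \<ge> 0" using d M by simp
    thus ?thesis unfolding ff_def using M by simp
  qed
  define q where "q = a div d"
  define \<rho> where "\<rho> = a mod d"
  have a: "a = d*q + \<rho>" unfolding q_def \<rho>_def by simp
  have \<rho>b: "0 \<le> \<rho>" "\<rho> < d" unfolding \<rho>_def using d by auto
  have FFa: "FF d M a = ff d M \<rho> - q*M" unfolding FF_def q_def \<rho>_def by simp
  from \<delta> consider "\<delta> = d" | "\<delta> = d+1" | "\<delta> = d-1" by auto
  thus ?thesis
  proof cases
    case 1
    have "a + \<delta> = d*(q+1) + \<rho>" using a 1 by (simp add: algebra_simps)
    hence "FF d M (a + \<delta>) = ff d M \<rho> - (q+1)*M" unfolding FF_def using divmodhelp[OF \<rho>b] by simp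
    thus ?thesis using FFa M by (simp add: algebra_simps)
  next
    case 2
    show ?thesis
    proof (cases "\<rho> + 1 < d")
      case True
      have "a + \<delta> = d*(q+1) + (\<rho>+1)" using a 2 by (simp add: algebra_simps)
      hence "FF d M (a + \<delta>) = ff d M (\<rho>+1) - (q+1)*M" unfolding FF_def using divmodhelp[of "\<rho>+1" d "q+1"] \<rho>b True by simp
      thus ?thesis using FFa ff_lip1[of M d \<rho>] M by (simp add: algebra_simps)
    next
      case False
      hence r1: "\<rho> = d - 1" using \<rho>b by simp
      have "a + \<delta> = d*(q+2) + 0" using a 2 r1 by (simp add: algebra_simps)
      hence "FF d M (a + \<delta>) = ff d M 0 - (q+2)*M" unfolding FF_def using divmodhelp[of 0 d "q+2"] d by simp
      thus ?thesis using FFa f0 fd r1 M by (simp add: algebra_simps)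
    qed
  next
    case 3
    show ?thesis
    proof (cases "\<rho> \<ge> 1")
      case True
      have "a + \<delta> = d*(q+1) + (\<rho>-1)" using a 3 by (simp add: algebra_simps)
      hence "FF d M (a + \<delta>) = ff d M (\<rho>-1) - (q+1)*M" unfolding FF_def using divmodhelp[of "\<rho>-1" d "q+1"] \<rho>b True by simp
      thus ?thesis using FFa ff_lip2[of M d \<rho>] M by (simp add: algebra_simps)
    next
      case False
      hence r0: "\<rho> = 0" using \<rho>b by simp
      have "a + \<delta> = d*q + (d-1)" using a 3 r0 by (simp add: algebra_simps)
      hence "FF d M (a + \<delta>) = ff d M (d-1) - q*M" unfolding FF_def using divmodhelp[of "d-1" d q] d by simp
      thus ?thesis using FFa f0 fd r0 M by (simp add: algebra_simps)
    qed
  qed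
qed

lemma svf_dec:
  assumes d: "d \<ge> 3" and M: "M \<ge> 2" and dM: "(d-1)*(M-1) \<ge> M" and n: "n > d"
    and e1: "FF d M (n-d) \<ge> 2 - M" and e2: "FF d M (n-d-1) \<ge> 2 - M"
    and x: "0 \<le> x" "x + d \<le> n" and ab: "a \<in> {x - 1, x}" "b \<in> {x + d - 1, x + d}"
  shows "svf d M n b < svf d M n a"
proof -
  have f0: "ff d M 0 = 0" unfolding ff_def using dM by simp
  have fd: "ff d M (d-1) = -M"
  proof -
    have "(d-1)*(M-1) \<ge> 0" using d M by simp
    thus ?thesis unfolding ff_def using M by simp
  qed
  show ?thesis
  proof (cases "a = -1")
    case True
    hence x0: "x = 0" using ab x by auto
    hence "b = d - 1 \<or> b = d" using ab by auto
    moreover have "FF d M (d - 1) = -M" unfolding FF_def using divmodhelp[of "d-1" d 0] d fd by simp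
    moreover have "FF d M d = -M" unfolding FF_def using divmodhelp[of 0 d 1] d f0 by simp
    ultimately have "svf d M n b = -M" unfolding svf_def using d n by auto
    thus ?thesis unfolding svf_def using True by simp
  next
    case False
    show ?thesis
    proof (cases "b = n")
      case True
      hence "x = n - d" using ab x by auto
      hence "a = n - d - 1 \<or> a = n - d" using ab by auto
      hence "svf d M n a \<ge> 2 - M" unfolding svf_def using e1 e2 n d by auto
      thus ?thesis unfolding svf_def using True by simp
    next
      case bn: False
      have a1: "svf d M n a = FF d M a" unfolding svf_def using False ab x n d by auto
      have b1: "svf d M n b = FF d M b" unfolding svf_def using bn ab x d by auto
      have "b - a \<in> {d-1, d, d+1}" using ab by auto
      hence "FF d M (a + (b - a)) < FF d M a" by (rule FF_dec[OF d M dM])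
      thus ?thesis using a1 b1 by simp
    qed
  qed
qed

lemma avoid_generic:
  assumes d: "d \<ge> 3" and M: "M \<ge> 2" and dM: "(d-1)*(M-1) \<ge> M" and n: "n > d"
    and e1: "FF d M (n-d) \<ge> 2 - M" and e2: "FF d M (n-d-1) \<ge> 2 - M"
  shows "\<exists>ws. iwalk ws \<and> ws \<noteq> [] \<and> (0, 1 - M) \<in> set ws \<and> (n, 1 - M) \<in> set ws \<and>
     (\<forall>p\<in>set ws. \<forall>q\<in>set ws. snd p = snd q \<longrightarrow> fst q - fst p \<noteq> d)"
proof -
  have n0: "n \<ge> 0" using n d by simp
  have e: "svf d M n (-1) = svf d M n n" unfolding svf_def by simp
  have m1: "svf d M n (-1) = 1 - M" unfolding svf_def by simp
  have "\<exists>ws. iwalk ws \<and> ws \<noteq> [] \<and> (0, svf d M n (-1)) \<in> set ws \<and> (n, svf d M n (-1)) \<in> set ws \<and>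
     (\<forall>p\<in>set ws. \<forall>q\<in>set ws. snd p = snd q \<longrightarrow> fst q - fst p \<noteq> d)"
    by (rule construct_walk[OF n0 e]) (rule svf_dec[OF d M dM n e1 e2], auto)
  thus ?thesis unfolding m1 .
qed

lemma caseA:
  assumes k: "k \<ge> 1" and rk: "r \<ge> k" and rd: "2*r \<le> d - 1" and nn: "n = k*d + r"
  shows "\<exists>ws. iwalk ws \<and> ws \<noteq> [] \<and> (0, -1-k) \<in> set ws \<and> (n, -1-k) \<in> set ws \<and>
     (\<forall>p\<in>set ws. \<forall>q\<in>set ws. snd p = snd q \<longrightarrow> fst q - fst p \<noteq> d)"
proof -
  define M where "M = k + 2"
  have d: "d \<ge> 3" using k rk rd by simp
  have M: "M \<ge> 2" unfolding M_def using k by simp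
  have dM: "(d-1)*(M-1) \<ge> M"
  proof -
    have "(d-1)*(M-1) \<ge> 2*(M-1)" using mult_right_mono[of 2 "d-1" "M-1"] d M by simp
    thus ?thesis using M by simp
  qed
  have n: "n > d"
  proof -
    have "k*d \<ge> 1*d" using mult_right_mono[of 1 k d] k d by simp
    thus ?thesis using nn rk k by simp
  qed
  have M1: "M - 1 = k + 1" unfolding M_def by simp
  have P1: "r*(k+1) \<ge> k*(k+1)" using mult_right_mono[of k r "k+1"] rk k by simp
  have P2: "(d-1-r)*(k+1) \<ge> r*(k+1)" using mult_right_mono[of r "d-1-r" "k+1"] rd k by simp
  have Q: "(k-1)*(k+2) = k*(k+1) - 2" by (simp add: algebra_simps)
  have r0: "0 \<le> r" "r < d" using rk k rd by auto
  have nd: "n - d = d*(k-1) + r" using nn by (simp add: algebra_simps)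
  have F1: "FF d M (n-d) = ff d M r - (k-1)*M" unfolding FF_def nd using divmodhelp[OF r0] by simp
  have ff1: "ff d M r = min (r*(k+1)) ((d-1-r)*(k+1) - M)" unfolding ff_def M1 ..
  have "ff d M r \<ge> k*(k+1) - (k+2)" unfolding ff1 
    unfolding M_def by (intro min.boundedI; insert P1 P2 k; smt (verit))
  hence e1: "FF d M (n-d) \<ge> 2 - M" unfolding F1 using Q k unfolding M_def by (simp add: algebra_simps)
  have nd1: "n - d - 1 = d*(k-1) + (r-1)" using nn by (simp add: algebra_simps)
  have r1: "0 \<le> r - 1" "r - 1 < d" using rk k rd by auto
  have F2: "FF d M (n-d-1) = ff d M (r-1) - (k-1)*M" unfolding FF_def nd1 using divmodhelp[OF r1] by simp
  have ff2: "ff d M (r-1) = min ((r-1)*(k+1)) ((d-1-(r-1))*(k+1) - M)" unfolding ff_def M1 ..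
  have P3: "(r-1)*(k+1) = r*(k+1) - (k+1)" by (simp add: algebra_simps)
  have P4: "(d-1-(r-1))*(k+1) = (d-1-r)*(k+1) + (k+1)" by (simp add: algebra_simps)
  have "ff d M (r-1) \<ge> k*(k+1) - (k+1)" unfolding ff2 P3 P4
    unfolding M_def by (intro min.boundedI; insert P1 P2 k; smt (verit))
  hence e2: "FF d M (n-d-1) \<ge> 2 - M" unfolding F2 using Q k unfolding M_def by (simp add: algebra_simps)
  have eqM: "1 - M = -1-k" unfolding M_def by simp
  show ?thesis using avoid_generic[OF d M dM n e1 e2] unfolding eqM .
qed

lemma caseB:
  assumes k: "k \<ge> 2" and uk: "u \<ge> k" and ud: "2*u \<le> d" and nn: "n = k*d - u"
  shows "\<exists>ws. iwalk ws \<and> ws \<noteq> [] \<and> (0, -1-k) \<in> set ws \<and> (n, -1-k) \<in> set ws \<and>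
     (\<forall>p\<in>set ws. \<forall>q\<in>set ws. snd p = snd q \<longrightarrow> fst q - fst p \<noteq> d)"
proof -
  define M where "M = k + 2"
  have d: "d \<ge> 3" using k uk ud by simp
  have M: "M \<ge> 2" unfolding M_def using k by simp
  have dM: "(d-1)*(M-1) \<ge> M"
  proof -
    have "(d-1)*(M-1) \<ge> 2*(M-1)" using mult_right_mono[of 2 "d-1" "M-1"] d M by simp
    thus ?thesis using M by simp
  qed
  have n: "n > d"
  proof -
    have "k*d \<ge> 2*d" using mult_right_mono[of 2 k d] k d by simp
    thus ?thesis using nn ud uk k by linarith
  qed
  have M1: "M - 1 = k + 1" unfolding M_def by simp
  have P1: "u*(k+1) \<ge> k*(k+1)" using mult_right_mono[of k u "k+1"] uk k by simp
  have P2: "(d-u)*(k+1) \<ge> u*(k+1)" using mult_right_mono[of u "d-u" "k+1"] ud k by simp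
  have Q: "(k-2)*(k+2) = k*(k+1) - k - 4" by (simp add: algebra_simps)
  have r0: "0 \<le> d - u" "d - u < d" using uk k ud by auto
  have nd: "n - d = d*(k-2) + (d - u)" using nn by (simp add: algebra_simps)
  have F1: "FF d M (n-d) = ff d M (d-u) - (k-2)*M" unfolding FF_def nd using divmodhelp[OF r0] by simp
  have ff1: "ff d M (d-u) = min ((d-u)*(k+1)) ((u-1)*(k+1) - M)" unfolding ff_def M1 by (simp add: algebra_simps)
  have P3: "(u-1)*(k+1) = u*(k+1) - (k+1)" by (simp add: algebra_simps)
  have "ff d M (d-u) \<ge> k*(k+1) - (k+1) - (k+2)" unfolding ff1 P3
    unfolding M_def by (intro min.boundedI; insert P1 P2 k; smt (verit))
  hence e1: "FF d M (n-d) \<ge> 2 - M" unfolding F1 using Q k unfolding M_def by (simp add: algebra_simps)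
  have nd1: "n - d - 1 = d*(k-2) + (d-u-1)" using nn by (simp add: algebra_simps)
  have r1: "0 \<le> d - u - 1" "d - u - 1 < d" using uk k ud by auto
  have F2: "FF d M (n-d-1) = ff d M (d-u-1) - (k-2)*M" unfolding FF_def nd1 using divmodhelp[OF r1] by simp
  have ff2: "ff d M (d-u-1) = min ((d-u-1)*(k+1)) (u*(k+1) - M)" unfolding ff_def M1 by (simp add: algebra_simps)
  have P4: "(d-u-1)*(k+1) = (d-u)*(k+1) - (k+1)" by (simp add: algebra_simps)
  have "ff d M (d-u-1) \<ge> k*(k+1) - (k+1) - (k+2)" unfolding ff2 P4
    unfolding M_def by (intro min.boundedI; insert P1 P2 k; smt (verit))
  hence e2: "FF d M (n-d-1) \<ge> 2 - M" unfolding F2 using Q k unfolding M_def by (simp add: algebra_simps)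
  have eqM: "1 - M = -1-k" unfolding M_def by simp
  show ?thesis using avoid_generic[OF d M dM n e1 e2] unfolding eqM .
qed

lemma kr_facts:
  fixes n d :: int
  assumes d: "d \<ge> 1"
  shows "n = k_nd n d * d + r_nd n d \<and> - (d div 2) \<le> r_nd n d \<and> r_nd n d \<le> d - 1 - d div 2"
proof -
  have fl: "\<lfloor>real_of_int d / 2\<rfloor> = d div 2"
    using floor_divide_of_int_eq[of d 2] by simp
  have ce: "\<lceil>real_of_int d / 2\<rceil> = d - d div 2"
  proof -
    have "\<lceil>real_of_int d / 2\<rceil> = - \<lfloor>- (real_of_int d / 2)\<rfloor>" by (simp add: ceiling_def)
    also have "- (real_of_int d / 2) = real_of_int (-d) / real_of_int 2" by simp
    also have "\<lfloor>real_of_int (-d) / real_of_int 2\<rfloor> = (-d) div 2" by (rule floor_divide_of_int_eq)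
    also have "- ((-d) div 2) = d - d div 2" by presburger
    finally show ?thesis .
  qed
  define P where "P p \<longleftrightarrow> n = fst p * d + snd p \<and> - \<lfloor>real_of_int d / 2\<rfloor> \<le> snd p \<and> snd p \<le> \<lceil>real_of_int d / 2\<rceil> - 1"
    for p :: "int \<times> int"
  have P': "P p \<longleftrightarrow> n = fst p * d + snd p \<and> - (d div 2) \<le> snd p \<and> snd p \<le> d - 1 - d div 2" for p
    unfolding P_def fl ce by auto
  have ex: "P ((n + d div 2) div d, (n + d div 2) mod d - d div 2)"
  proof -
    have e: "(n + d div 2) div d * d + (n + d div 2) mod d = n + d div 2" by (rule div_mult_mod_eq)
    have m: "0 \<le> (n + d div 2) mod d" "(n + d div 2) mod d < d" using d by auto
    have "n = (n + d div 2) div d * d + ((n + d div 2) mod d - d div 2)" using e by linarith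
    thus ?thesis unfolding P' using m by simp
  qed
  have un: "p = q" if "P p" "P q" for p q
  proof -
    have e: "(fst p - fst q) * d = snd q - snd p" using that unfolding P' by (simp add: algebra_simps)
    have b: "\<bar>snd q - snd p\<bar> < d" using that unfolding P' by auto
    have "fst p = fst q"
    proof (rule ccontr)
      assume "fst p \<noteq> fst q"
      hence "\<bar>fst p - fst q\<bar> \<ge> 1" by simp
      hence "\<bar>fst p - fst q\<bar> * d \<ge> 1 * d" using d by (intro mult_right_mono) auto
      hence "\<bar>(fst p - fst q) * d\<bar> \<ge> d" using d by (simp add: abs_mult)
      thus False using e b by simp
    qed
    moreover have "snd p = snd q" using e calculation by simp
    ultimately show ?thesis by (simp add: prod_eq_iff)
  qed
  have "P (kr_pair n d)" unfolding kr_pair_def P_def[symmetric]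
    by (rule theI[of P, OF ex]) (rule un[OF _ ex])
  thus ?thesis unfolding P' k_nd_def r_nd_def .
qed

definition cpt :: "complex \<Rightarrow> int \<times> int" where
  "cpt z = (\<lfloor>Re z\<rfloor>, \<lfloor>Im z\<rfloor>)"

lemma gauss_re: "gaussian_int z \<Longrightarrow> Re z = of_int \<lfloor>Re z\<rfloor>"
  unfolding gaussian_int_def by (auto elim!: Ints_cases)

lemma gauss_im: "gaussian_int z \<Longrightarrow> Im z = of_int \<lfloor>Im z\<rfloor>"
  unfolding gaussian_int_def by (auto elim!: Ints_cases)

lemma int_sq1:
  assumes "a^2 + b^2 = (1::int)"
  shows "(b = 0 \<and> \<bar>a\<bar> = 1) \<or> (a = 0 \<and> \<bar>b\<bar> = 1)"
proof -
  have sq: "x \<noteq> 0 \<Longrightarrow> x^2 \<ge> 1" for x :: int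
  proof -
    assume "x \<noteq> 0"
    hence "\<bar>x\<bar> \<ge> 1" by simp
    hence "\<bar>x\<bar> * \<bar>x\<bar> \<ge> 1 * 1" by (intro mult_mono) auto
    thus "x^2 \<ge> 1" by (simp add: power2_eq_square abs_mult[symmetric])
  qed
  have "a = 0 \<or> b = 0"
  proof (rule ccontr)
    assume "\<not> (a = 0 \<or> b = 0)"
    hence "a^2 \<ge> 1" "b^2 \<ge> 1" using sq by auto
    thus False using assms by simp
  qed
  thus ?thesis
  proof
    assume a0: "a = 0"
    hence "b^2 = 1" using assms by simp
    hence "b = 1 \<or> b = -1" using power2_eq_1_iff by blast
    thus ?thesis using a0 by auto
  next
    assume b0: "b = 0"
    hence "a^2 = 1" using assms by simp
    hence "a = 1 \<or> a = -1" using power2_eq_1_iff by blast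
    thus ?thesis using b0 by auto
  qed
qed

lemma adj_of_cmod:
  assumes g: "gaussian_int z" "gaussian_int w" and c: "cmod (w - z) = 1"
  shows "adj (cpt z) (cpt w)"
proof -
  define a where "a = \<lfloor>Re w\<rfloor> - \<lfloor>Re z\<rfloor>"
  define b where "b = \<lfloor>Im w\<rfloor> - \<lfloor>Im z\<rfloor>"
  have ra: "Re (w - z) = of_int a" unfolding a_def minus_complex.sel of_int_diff
    using gauss_re[OF g(1)] gauss_re[OF g(2)] by linarith
  have rb: "Im (w - z) = of_int b" unfolding b_def minus_complex.sel of_int_diff
    using gauss_im[OF g(1)] gauss_im[OF g(2)] by linarith
  have "(Re (w - z))^2 + (Im (w - z))^2 = 1"
    using c unfolding cmod_def by (metis real_sqrt_eq_1_iff)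
  hence "real_of_int (a^2 + b^2) = 1" using ra rb by simp
  hence "a^2 + b^2 = 1" by linarith
  from int_sq1[OF this] show ?thesis unfolding adj_def cpt_def a_def b_def by auto
qed

lemma walk_iwalk: "is_walk zs \<Longrightarrow> iwalk (map cpt zs)"
  unfolding iwalk_def
proof (intro allI impI)
  fix t assume w: "is_walk zs" and t: "Suc t < length (map cpt zs)"
  have g: "gaussian_int (zs!t)" "gaussian_int (zs!Suc t)" using w t unfolding is_walk_def by auto
  have "cmod (zs!Suc t - zs!t) = 1" using w t unfolding is_walk_def by auto
  thus "adj (map cpt zs ! t) (map cpt zs ! Suc t)" using adj_of_cmod[OF g] t by simp
qed

lemma gauss_diff:
  assumes "gaussian_int z" "gaussian_int w"
  shows "(z - w = complex_of_real (real_of_int e)) \<longleftrightarrow> (\<lfloor>Re z\<rfloor> - \<lfloor>Re w\<rfloor> = e \<and> \<lfloor>Im z\<rfloor> = \<lfloor>Im w\<rfloor>)"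
proof -
  have h: "Re z = of_int \<lfloor>Re z\<rfloor>" "Re w = of_int \<lfloor>Re w\<rfloor>" "Im z = of_int \<lfloor>Im z\<rfloor>" "Im w = of_int \<lfloor>Im w\<rfloor>"
    using gauss_re[OF assms(1)] gauss_re[OF assms(2)] gauss_im[OF assms(1)] gauss_im[OF assms(2)] by auto
  have "(z - w = complex_of_real (real_of_int e)) \<longleftrightarrow> (Re z - Re w = of_int e \<and> Im z - Im w = 0)"
    by (simp add: complex_eq_iff)
  also have "(Re z - Re w = of_int e) \<longleftrightarrow> (real_of_int (\<lfloor>Re z\<rfloor> - \<lfloor>Re w\<rfloor>) = real_of_int e)"
    unfolding of_int_diff using h by linarith
  also have "(Im z - Im w = 0) \<longleftrightarrow> (real_of_int (\<lfloor>Im z\<rfloor> - \<lfloor>Im w\<rfloor>) = real_of_int 0)"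
    unfolding of_int_diff using h by linarith
  also have "(real_of_int (\<lfloor>Re z\<rfloor> - \<lfloor>Re w\<rfloor>) = real_of_int e \<and> real_of_int (\<lfloor>Im z\<rfloor> - \<lfloor>Im w\<rfloor>) = real_of_int 0)
     \<longleftrightarrow> (\<lfloor>Re z\<rfloor> - \<lfloor>Re w\<rfloor> = e \<and> \<lfloor>Im z\<rfloor> = \<lfloor>Im w\<rfloor>)"
    by (simp only: of_int_eq_iff) simp
  finally show ?thesis .
qed

lemma dir1:
  fixes n d :: nat
  assumes d: "d \<ge> 1" and bad: "badl (int d) (int n)"
  shows "\<not> avoidable n d"
proof
  assume "avoidable n d"
  then obtain zs r s where w: "is_walk zs" and rs: "r < length zs" "s < length zs"
    and ch: "zs!r - zs!s = of_nat n" and nc: "\<forall>t < length zs. \<forall>u < length zs. zs!t - zs!u \<noteq> of_nat d"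
    unfolding avoidable_def by blast
  define ws where "ws = map cpt zs"
  have iw: "iwalk ws" unfolding ws_def by (rule walk_iwalk[OF w])
  have g: "\<And>t. t < length zs \<Longrightarrow> gaussian_int (zs!t)" using w unfolding is_walk_def by auto
  have chd: "\<And>t u e. t < length zs \<Longrightarrow> u < length zs \<Longrightarrow>
      (zs!t - zs!u = complex_of_real (real_of_int e)) \<longleftrightarrow> (fst (ws!t) - fst (ws!u) = e \<and> snd (ws!t) = snd (ws!u))"
    unfolding ws_def cpt_def using gauss_diff g by simp
  have ch': "fst (ws!r) - fst (ws!s) = int n \<and> snd (ws!r) = snd (ws!s)"
    using chd[OF rs, of "int n"] ch by simp
  define i where "i = min r s"
  define j where "j = max r s"
  have ij: "i \<le> j" "j < length ws" unfolding i_def j_def ws_def using rs by auto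
  have sn: "snd (ws!i) = snd (ws!j)" unfolding i_def j_def using ch' by (auto simp: min_def max_def)
  have bj: "badl (int d) (fst (ws!j) - fst (ws!i))"
  proof (cases "s \<le> r")
    case True
    hence "i = s" "j = r" unfolding i_def j_def by auto
    thus ?thesis using ch' bad by simp
  next
    case False
    hence "i = r" "j = s" unfolding i_def j_def by auto
    hence "fst (ws!j) - fst (ws!i) = - int n" using ch' by simp
    thus ?thesis using bad badl_abs by simp
  qed
  obtain t u where tu: "t < length ws" "u < length ws" "snd (ws!t) = snd (ws!u)" "fst (ws!t) - fst (ws!u) = int d"
    using unavoid_int[OF iw _ ij sn bj] d by auto
  have "zs!t - zs!u = complex_of_real (real_of_int (int d))"
    using chd[of t u "int d"] tu unfolding ws_def by simp
  hence "zs!t - zs!u = of_nat d" by simp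
  thus False using nc tu unfolding ws_def by auto
qed

definition ptc :: "int \<times> int \<Rightarrow> complex" where
  "ptc p = Complex (of_int (fst p)) (of_int (snd p))"

lemma dir2:
  fixes n d :: nat
  assumes w: "iwalk ws" "ws \<noteq> []" and p0: "(0, h) \<in> set ws" and p1: "(int n, h) \<in> set ws"
    and nc: "\<forall>p\<in>set ws. \<forall>q\<in>set ws. snd p = snd q \<longrightarrow> fst q - fst p \<noteq> int d"
  shows "avoidable n d"
proof -
  define zs where "zs = map ptc ws"
  have gz: "\<And>z. gaussian_int (ptc z)" unfolding gaussian_int_def ptc_def by simp
  have isw: "is_walk zs" unfolding is_walk_def
  proof (intro conjI allI impI ballI)
    show "zs \<noteq> []" unfolding zs_def using w by simp
  next
    fix z assume "z \<in> set zs" thus "gaussian_int z" unfolding zs_def using gz by auto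
  next
    fix j assume j: "Suc j < length zs"
    have "adj (ws!j) (ws!Suc j)" using w j unfolding iwalk_def zs_def by auto
    hence "(fst (ws!Suc j) - fst (ws!j))^2 + (snd (ws!Suc j) - snd (ws!j))^2 = 1"
      by (cases rule: adj_cases) simp_all
    hence "real_of_int ((fst (ws!Suc j) - fst (ws!j))^2 + (snd (ws!Suc j) - snd (ws!j))^2) = 1" by simp
    hence "(real_of_int (fst (ws!Suc j)) - real_of_int (fst (ws!j)))^2 + (real_of_int (snd (ws!Suc j)) - real_of_int (snd (ws!j)))^2 = 1"
      by simp
    thus "cmod (zs!Suc j - zs!j) = 1" using j unfolding zs_def ptc_def cmod_def by simp
  qed
  obtain r where r: "r < length ws" "ws!r = (int n, h)" using p1 by (auto simp: in_set_conv_nth)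
  obtain s where s: "s < length ws" "ws!s = (0, h)" using p0 by (auto simp: in_set_conv_nth)
  have "zs!r - zs!s = of_nat n" using r s unfolding zs_def ptc_def by (simp add: complex_eq_iff)
  moreover have "\<forall>t < length zs. \<forall>u < length zs. zs!t - zs!u \<noteq> of_nat d"
  proof (intro allI impI notI)
    fix t u assume tu: "t < length zs" "u < length zs" and e: "zs!t - zs!u = of_nat d"
    have "real_of_int (fst (ws!t)) - real_of_int (fst (ws!u)) = real d"
      "real_of_int (snd (ws!t)) - real_of_int (snd (ws!u)) = 0"
      using e tu unfolding zs_def ptc_def by (simp_all add: complex_eq_iff)
    hence "fst (ws!t) - fst (ws!u) = int d" "snd (ws!u) = snd (ws!t)" by linarith+
    moreover have "ws!t \<in> set ws" "ws!u \<in> set ws" using tu unfolding zs_def by auto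
    ultimately show False using nc by blast
  qed
  moreover have "r < length zs" "s < length zs" using r s unfolding zs_def by auto
  ultimately show ?thesis unfolding avoidable_def using isw by blast
qed

lemma straight:
  fixes n d :: int
  assumes n: "n \<ge> 0" "n < d"
  shows "\<exists>ws. iwalk ws \<and> ws \<noteq> [] \<and> (0, 0) \<in> set ws \<and> (n, 0) \<in> set ws \<and>
     (\<forall>p\<in>set ws. \<forall>q\<in>set ws. snd p = snd q \<longrightarrow> fst q - fst p \<noteq> d)"
proof -
  define ws where "ws = map (\<lambda>t. (int t, 0::int)) [0..<nat n + 1]"
  have iw: "iwalk ws" unfolding iwalk_def ws_def adj_def by (simp del: upt_Suc)
  have st: "set ws = (\<lambda>t. (int t, 0::int)) ` {0..<nat n + 1}" unfolding ws_def by (simp del: upt_Suc)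
  have "(0, 0) \<in> set ws" unfolding st by force
  moreover have "(n, 0) \<in> set ws" unfolding st using n by (intro image_eqI[of _ _ "nat n"]) auto
  moreover have "\<forall>p\<in>set ws. \<forall>q\<in>set ws. snd p = snd q \<longrightarrow> fst q - fst p \<noteq> d"
    unfolding st using n by auto
  moreover have "ws \<noteq> []" unfolding ws_def by simp
  ultimately show ?thesis using iw by blast
qed

theorem mainTheorem1:
  fixes n d :: nat
  assumes "n \<ge> 1" and "d \<ge> 1"
  shows "d \<in> A_set n \<longleftrightarrow> k_nd (int n) (int d) \<ge> \<bar>r_nd (int n) (int d)\<bar> + 1"
proof -
  define K where "K = k_nd (int n) (int d)"
  define R where "R = r_nd (int n) (int d)"
  define D where "D = int d"
  define NN where "NN = int n"
  have D1: "D \<ge> 1" unfolding D_def using assms by simp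
  have N1: "NN \<ge> 1" unfolding NN_def using assms by simp
  have kr: "NN = K * D + R" "- (D div 2) \<le> R" "R \<le> D - 1 - D div 2"
    using kr_facts[OF D1, of NN] unfolding K_def R_def D_def NN_def by auto
  show ?thesis unfolding K_def[symmetric] R_def[symmetric]
  proof
    assume "d \<in> A_set n"
    hence na: "\<not> avoidable n d" unfolding A_set_def by simp
    show "K \<ge> \<bar>R\<bar> + 1"
    proof (rule ccontr)
      assume nc: "\<not> K \<ge> \<bar>R\<bar> + 1"
      have ex: "\<exists>ws h. iwalk ws \<and> ws \<noteq> [] \<and> (0, h) \<in> set ws \<and> (NN, h) \<in> set ws \<and>
         (\<forall>p\<in>set ws. \<forall>q\<in>set ws. snd p = snd q \<longrightarrow> fst q - fst p \<noteq> D)"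
      proof (cases "NN < D")
        case True
        thus ?thesis using straight[of NN D] N1 by auto
      next
        case False
        have h2: "2 * (D div 2) \<ge> D - 1" by presburger
        have h3: "2 * (D div 2) \<le> D" by presburger
        have K1: "K \<ge> 1"
        proof (rule ccontr)
          assume "\<not> K \<ge> 1"
          hence "K * D \<le> 0" using D1 by (simp add: mult_nonpos_nonneg)
          thus False using kr False h2 by linarith
        qed
        have ND: "NN \<noteq> D"
        proof
          assume nd: "NN = D"
          have "K = 1"
          proof (rule ccontr)
            assume "K \<noteq> 1"
            hence "K \<ge> 2" using K1 by simp
            hence "K * D \<ge> 2 * D" using D1 by (intro mult_right_mono) auto
            thus False using kr nd h2 h3 by linarith
          qed
          hence "R = 0" using kr nd by simp
          thus False using nc \<open>K = 1\<close> by simp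
        qed
        show ?thesis
        proof (cases "R \<ge> 0")
          case True
          have rk: "R \<ge> K" using nc True by simp
          have rd: "2 * R \<le> D - 1" using kr h2 by linarith
          from caseA[OF K1 rk rd kr(1)] show ?thesis by blast
        next
          case False
          define u where "u = - R"
          have uk: "u \<ge> K" using nc False unfolding u_def by simp
          have ud: "2 * u \<le> D" using kr h3 unfolding u_def by linarith
          have K2: "K \<ge> 2"
          proof (rule ccontr)
            assume "\<not> K \<ge> 2"
            hence "K = 1" using K1 by simp
            hence "NN = D - u" using kr unfolding u_def by simp
            thus False using \<open>\<not> NN < D\<close> False unfolding u_def by simp
          qed
          have nn: "NN = K * D - u" using kr unfolding u_def by simp
          from caseB[OF K2 uk ud nn] show ?thesis by blast
        qed
      qed
      then obtain ws h where ws: "iwalk ws" "ws \<noteq> []" "(0, h) \<in> set ws" "(int n, h) \<in> set ws"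
         "\<forall>p\<in>set ws. \<forall>q\<in>set ws. snd p = snd q \<longrightarrow> fst q - fst p \<noteq> int d"
        unfolding NN_def D_def by blast
      have "avoidable n d" by (rule dir2[OF ws])
      thus False using na by simp
    qed
  next
    assume c: "K \<ge> \<bar>R\<bar> + 1"
    have "badl D NN"
      unfolding badl_def using c kr N1 by (intro exI[of _ K]) auto
    hence "\<not> avoidable n d" using dir1[of d n] assms unfolding D_def NN_def by simp
    thus "d \<in> A_set n" unfolding A_set_def by simp
  qed
qed

end
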